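(* Let $f\in L^{1}$ and let $B=(b_{n,k})$ (as in the context) satisfy $$\left|b_{r,r-l}-b_{r+1,r+1-l}\right|\ll \frac{1}{(r+1)^{2}}\quad\text{for } 0\le l\le r.$$ Let $A$ be the Cesàro matrix $a_{n,k}=\frac1{n+1}$ for $0\le k\le n$, $a_{n,k}=0$ for $k>n$, and write $\widetilde T_{n,(\frac1{n+1}),B}$ for $\widetilde T_{n,A,B}$. Then for every natural $n$ and every real $x$, $$\left|\widetilde{T}_{n,(\frac{1}{n+1}),B}f(x)-\widetilde{f}\!\left(x,\tfrac{\pi}{n+1}\right)\right|\ll \frac{1}{n+1}\sum_{r=0}^{n}\left[\frac{1}{r+1}\sum_{k=0}^{r}\widetilde{w}_{x}f\!\left(\frac{\pi}{k+1}\right)\right],$$ and, at every point $x$ at which $\widetilde f(x)$ exists and $\frac{1}{\pi}\int_{0}^{\pi/(n+1)}\frac{|\psi_{x}(t)|}{t}\,dt\ll \widetilde{w}_{x}f\!\left(\frac{\pi}{n+1}\right)$ for all natural $n$, $$\left|\widetilde{T}_{n,(\frac{1}{n+1}),B}f(x)-\widetilde{f}(x)\right|\ll \frac{1}{n+1}\sum_{r=0}^{n}\left[\frac{1}{r+1}\sum_{k=0}^{r}\widetilde{w}_{x}f\!\left(\frac{\pi}{k+1}\right)\right].$$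
   Context: $L^{p}$ is the space of $2\pi$-periodic real functions that are $p$-th power Lebesgue integrable (essentially bounded if $p=\infty$) on $[-\pi,\pi]$. For $f\in L^1$ with Fourier coefficients $a_\nu(f),b_\nu(f)$, $\widetilde S_k f(x)=\sum_{\nu=1}^{k}(a_\nu(f)\sin\nu x-b_\nu(f)\cos\nu x)$. Put $\psi_x(t)=f(x+t)-f(x-t)$, $\widetilde f(x,\epsilon)=-\frac{1}{\pi}\int_{\epsilon}^{\pi}\psi_x(t)\frac12\cot\frac t2\,dt$, $\widetilde f(x)=\lim_{\epsilon\to0^+}\widetilde f(x,\epsilon)$. $B=(b_{n,k})$ is an infinite lower triangular real matrix with $b_{n,k}\ge0$ for $0\le k\le n$, $b_{n,k}=0$ for $k>n$, $\sum_{k=0}^nb_{n,k}=1$. For a matrix $A=(a_{n,k})$ of the same type, $\widetilde T_{n,A,B}f(x)=\sum_{r=0}^{n}\sum_{k=0}^{r}a_{n,r}b_{r,k}\widetilde S_kf(x)$. $\widetilde w_xf(\delta)=\frac1\delta\int_0^\delta|\psi_x(u)|\,du$. $I_1\ll I_2$ means $I_1\le KI_2$ for a positive constant $K$ independent of $n$. *)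

theory Defs
  imports "HOL-Analysis.Analysis"
begin

definition L1_periodic :: "(real \<Rightarrow> real) \<Rightarrow> bool" where
  "L1_periodic f \<longleftrightarrow> (\<forall>x. f (x + 2 * pi) = f x) \<and> f absolutely_integrable_on {-pi..pi}"

definition fourier_a :: "(real \<Rightarrow> real) \<Rightarrow> nat \<Rightarrow> real" where
  "fourier_a f \<nu> = (1 / pi) * integral {-pi..pi} (\<lambda>t. f t * cos (real \<nu> * t))"

definition fourier_b :: "(real \<Rightarrow> real) \<Rightarrow> nat \<Rightarrow> real" where
  "fourier_b f \<nu> = (1 / pi) * integral {-pi..pi} (\<lambda>t. f t * sin (real \<nu> * t))"

definition conj_partial_sum :: "(real \<Rightarrow> real) \<Rightarrow> nat \<Rightarrow> real \<Rightarrow> real" where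
  "conj_partial_sum f k x =
     (\<Sum>\<nu>=1..k. fourier_a f \<nu> * sin (real \<nu> * x) - fourier_b f \<nu> * cos (real \<nu> * x))"

definition psi :: "(real \<Rightarrow> real) \<Rightarrow> real \<Rightarrow> real \<Rightarrow> real" where
  "psi f x t = f (x + t) - f (x - t)"

definition conj_trunc :: "(real \<Rightarrow> real) \<Rightarrow> real \<Rightarrow> real \<Rightarrow> real" where
  "conj_trunc f x \<epsilon> = - (1 / pi) * integral {\<epsilon>..pi} (\<lambda>t. psi f x t * (cot (t / 2) / 2))"

definition conj_exists :: "(real \<Rightarrow> real) \<Rightarrow> real \<Rightarrow> bool" where
  "conj_exists f x \<longleftrightarrow> (\<exists>L. ((\<lambda>\<epsilon>. conj_trunc f x \<epsilon>) \<longlongrightarrow> L) (at_right 0))"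

definition conj_fun :: "(real \<Rightarrow> real) \<Rightarrow> real \<Rightarrow> real" where
  "conj_fun f x = Lim (at_right 0) (\<lambda>\<epsilon>. conj_trunc f x \<epsilon>)"

definition lt_stoch :: "(nat \<Rightarrow> nat \<Rightarrow> real) \<Rightarrow> bool" where
  "lt_stoch b \<longleftrightarrow> (\<forall>n k. k \<le> n \<longrightarrow> b n k \<ge> 0) \<and> (\<forall>n k. k > n \<longrightarrow> b n k = 0)
      \<and> (\<forall>n. (\<Sum>k=0..n. b n k) = 1)"

definition T_conj :: "(nat \<Rightarrow> nat \<Rightarrow> real) \<Rightarrow> (nat \<Rightarrow> nat \<Rightarrow> real) \<Rightarrow> (real \<Rightarrow> real) \<Rightarrow> nat \<Rightarrow> real \<Rightarrow> real" where
  "T_conj a b f n x = (\<Sum>r=0..n. \<Sum>k=0..r. a n r * b r k * conj_partial_sum f k x)"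

definition cesaro :: "nat \<Rightarrow> nat \<Rightarrow> real" where
  "cesaro n k = (if k \<le> n then 1 / (real n + 1) else 0)"

definition w_conj :: "(real \<Rightarrow> real) \<Rightarrow> real \<Rightarrow> real \<Rightarrow> real" where
  "w_conj f x \<delta> = (1 / \<delta>) * integral {0..\<delta>} (\<lambda>u. \<bar>psi f x u\<bar>)"

definition rhs_sum :: "(real \<Rightarrow> real) \<Rightarrow> real \<Rightarrow> nat \<Rightarrow> real" where
  "rhs_sum f x n = (1 / (real n + 1)) *
     (\<Sum>r=0..n. (1 / (real r + 1)) * (\<Sum>k=0..r. w_conj f x (pi / (real k + 1))))"

end

theory Submission
  imports Defs
begin

lemma sin_ge_xcos: assumes "0 \<le> s" "s \<le> pi" shows "s * cos s \<le> sin s"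
proof -
  have "(\<lambda>s. sin s - s * cos s) 0 \<le> (\<lambda>s. sin s - s * cos s) s"
  proof (rule DERIV_nonneg_imp_increasing_open[OF assms(1)])
    fix x assume x: "0 < x" "x < s"
    show "\<exists>y. ((\<lambda>s. sin s - s * cos s) has_real_derivative y) (at x) \<and> 0 \<le> y"
      apply (rule exI[of _ "x * sin x"])
      apply (intro conjI)
       apply (auto intro!: derivative_eq_intros)[1]
      using x assms sin_ge_zero[of x] by auto
  next
    show "continuous_on {0..s} (\<lambda>s. sin s - s * cos s)"
      by (intro continuous_intros)
  qed
  then show ?thesis by simp
qed

lemma cot_half_le: assumes "0 < t" "t \<le> pi" shows "cot (t/2) / 2 \<le> 1 / t" "0 \<le> cot (t/2) / 2"
proof -
  have s: "sin (t/2) > 0" using assms by (intro sin_gt_zero) auto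
  have c: "cos (t/2) \<ge> 0" using assms by (intro cos_ge_zero) auto
  have "(t/2) * cos (t/2) \<le> sin (t/2)" using assms by (intro sin_ge_xcos) auto
  then show "cot (t/2) / 2 \<le> 1 / t" using s assms
    by (simp add: cot_def field_simps)
  show "0 \<le> cot (t/2) / 2" using s c by (simp add: cot_def)
qed

lemma sin_div_decr: assumes "0 < a" "a \<le> b" "b \<le> pi" shows "sin b / b \<le> sin a / a"
proof -
  have "(\<lambda>s. sin s / s) a \<ge> (\<lambda>s. sin s / s) b"
  proof (rule DERIV_nonpos_imp_decreasing_open[OF assms(2)])
    fix x assume x: "a < x" "x < b"
    have "x * cos x \<le> sin x" using x assms by (intro sin_ge_xcos) auto
    have d: "((\<lambda>s. sin s / s) has_real_derivative (cos x * x - 1 * sin x) / (x ^ Suc (Suc 0))) (at x)"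
      using x assms by (intro DERIV_quotient DERIV_sin DERIV_ident) auto
    have "(cos x * x - 1 * sin x) / (x ^ Suc (Suc 0)) \<le> 0" using \<open>x * cos x \<le> sin x\<close>
      by (intro divide_nonpos_nonneg) (auto simp: mult.commute)
    then show "\<exists>y. ((\<lambda>s. sin s / s) has_real_derivative y) (at x) \<and> y \<le> 0" using d by blast
  next
    show "continuous_on {a..b} (\<lambda>s. sin s / s)"
      using assms by (intro continuous_intros) auto
  qed
  then show ?thesis by simp
qed

lemma jordan: assumes "0 \<le> t" "t \<le> pi" shows "t / pi \<le> sin (t/2)"
proof (cases "t = 0")
  case True then show ?thesis by simp
next
  case False
  then have "sin (pi/2) / (pi/2) \<le> sin (t/2) / (t/2)" using assms by (intro sin_div_decr) auto
  then show ?thesis using False assms by (simp add: field_simps)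
qed

lemma dk_closed: "2 * sin (t/2) * (\<Sum>\<nu>=1..k. sin (real \<nu> * t)) = cos (t/2) - cos ((real k + 1/2) * t)"
proof (induction k)
  case 0 then show ?case by simp
next
  case (Suc k)
  have e: "2 * sin (t/2) * sin ((real k + 1) * t) = cos ((real k + 1/2) * t) - cos ((real k + 3/2) * t)"
  proof -
    have "cos ((real k + 1/2) * t) = cos ((real k + 1) * t - t/2)" by (simp add: algebra_simps)
    moreover have "cos ((real k + 3/2) * t) = cos ((real k + 1) * t + t/2)" by (simp add: algebra_simps)
    ultimately show ?thesis by (simp add: cos_diff cos_add)
  qed
  show ?case using Suc e by (simp add: algebra_simps)
qed

lemma dk_bound: "\<bar>\<Sum>\<nu>=1..k. sin (real \<nu> * t)\<bar> \<le> real k"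
proof -
  have "\<bar>\<Sum>\<nu>=1..k. sin (real \<nu> * t)\<bar> \<le> (\<Sum>\<nu>=1..k. \<bar>sin (real \<nu> * t)\<bar>)" by (rule sum_abs)
  also have "\<dots> \<le> (\<Sum>\<nu>=1..k. 1)" by (intro sum_mono) simp
  finally show ?thesis by simp
qed

lemma cos_psum: "2 * sin (t/2) * (\<Sum>s=m..<r. cos ((real s + 1/2) * t)) = sin (real r * t) - sin (real m * t)" if "m \<le> r"
  using that
proof (induction r)
  case 0 then show ?case by simp
next
  case (Suc r)
  have e: "2 * sin (t/2) * cos ((real r + 1/2) * t) = sin ((real r + 1) * t) - sin (real r * t)"
  proof -
    have "sin ((real r + 1) * t) = sin ((real r + 1/2) * t + t/2)" by (simp add: algebra_simps)
    moreover have "sin (real r * t) = sin ((real r + 1/2) * t - t/2)" by (simp add: algebra_simps)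
    ultimately show ?thesis by (simp add: sin_diff sin_add)
  qed
  show ?case
  proof (cases "m = Suc r")
    case True then show ?thesis by simp
  next
    case False
    then have "m \<le> r" using Suc by simp
    then show ?thesis using Suc e by (simp add: algebra_simps)
  qed
qed

lemma sin_psum: "2 * sin (t/2) * (\<Sum>s=m..<r. sin ((real s + 1/2) * t)) = cos (real m * t) - cos (real r * t)" if "m \<le> r"
  using that
proof (induction r)
  case 0 then show ?case by simp
next
  case (Suc r)
  have e: "2 * sin (t/2) * sin ((real r + 1/2) * t) = cos (real r * t) - cos ((real r + 1) * t)"
  proof -
    have "cos ((real r + 1) * t) = cos ((real r + 1/2) * t + t/2)" by (simp add: algebra_simps)
    moreover have "cos (real r * t) = cos ((real r + 1/2) * t - t/2)" by (simp add: algebra_simps)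
    ultimately show ?thesis by (simp add: cos_diff cos_add)
  qed
  show ?case
  proof (cases "m = Suc r")
    case True then show ?thesis by simp
  next
    case False
    then have "m \<le> r" using Suc by simp
    then show ?thesis using Suc e by (simp add: algebra_simps)
  qed
qed

lemma sum_swap_tri: "(\<Sum>r=0..(n::nat). \<Sum>k=0..r. f r k) = (\<Sum>k=0..n. \<Sum>r=k..n. (f r k :: real))"
proof (induction n)
  case 0 then show ?case by simp
next
  case (Suc n)
  have "(\<Sum>k=0..Suc n. \<Sum>r=k..Suc n. f r k) = (\<Sum>k=0..Suc n. (\<Sum>r=k..n. f r k) + f (Suc n) k)"
    by (intro sum.cong refl) auto
  also have "\<dots> = (\<Sum>k=0..n. \<Sum>r=k..n. f r k) + (\<Sum>k=0..Suc n. f (Suc n) k)"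
    by (simp add: sum.distrib)
  finally show ?case using Suc by simp
qed

lemma sq_cancel: "(\<Sum>l=0..r. (C::real) / (real r + 1)^2) = C / (real r + 1)"
proof -
  have "(\<Sum>l=0..r. (C::real) / (real r + 1)^2) = (real r + 1) * (C / (real r + 1)^2)" by simp
  also have "\<dots> = C / (real r + 1)"
    by (simp add: power2_eq_square)
  finally show ?thesis .
qed

lemma abel_identity:
  fixes \<alpha> P :: "nat \<Rightarrow> real"
  assumes "m \<le> n"
  shows "(\<Sum>r=m..n. \<alpha> r * P r) = (\<Sum>s=m..n. \<alpha> s) * P n - (\<Sum>r=m..<n. (\<Sum>s=m..r. \<alpha> s) * (P (Suc r) - P r))"
  using assms
proof (induction n)
  case 0 then show ?case by simp
next
  case (Suc n)
  show ?case
  proof (cases "m = Suc n")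
    case True then show ?thesis by simp
  next
    case False
    then have "m \<le> n" using Suc by simp
    then show ?thesis using Suc.IH by (simp add: algebra_simps)
  qed
qed

lemma abel_bound:
  fixes \<alpha> P :: "nat \<Rightarrow> real"
  assumes "m \<le> n" and E: "\<And>r. m \<le> r \<Longrightarrow> r \<le> n \<Longrightarrow> \<bar>\<Sum>s=m..r. \<alpha> s\<bar> \<le> A"
  shows "\<bar>\<Sum>r=m..n. \<alpha> r * P r\<bar> \<le> A * (\<bar>P n\<bar> + (\<Sum>r=m..<n. \<bar>P (Suc r) - P r\<bar>))"
proof -
  have A0: "0 \<le> A" using E[of m] assms by fastforce
  have "\<bar>\<Sum>r=m..n. \<alpha> r * P r\<bar> \<le> \<bar>(\<Sum>s=m..n. \<alpha> s) * P n\<bar> + \<bar>\<Sum>r=m..<n. (\<Sum>s=m..r. \<alpha> s) * (P (Suc r) - P r)\<bar>"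
    unfolding abel_identity[OF assms(1)] by linarith
  also have "\<bar>(\<Sum>s=m..n. \<alpha> s) * P n\<bar> \<le> A * \<bar>P n\<bar>"
    unfolding abs_mult using E[of n] assms by (intro mult_right_mono) auto
  also have "\<bar>\<Sum>r=m..<n. (\<Sum>s=m..r. \<alpha> s) * (P (Suc r) - P r)\<bar> \<le> (\<Sum>r=m..<n. A * \<bar>P (Suc r) - P r\<bar>)"
    by (rule order_trans[OF sum_abs], intro sum_mono) (auto simp: abs_mult intro!: mult_right_mono E)
  finally show ?thesis by (simp add: sum_distrib_left distrib_left)
qed

context
  fixes b :: "nat \<Rightarrow> nat \<Rightarrow> real" and C :: real
  assumes lt: "lt_stoch b"
    and bc: "\<forall>r l. l \<le> r \<longrightarrow> \<bar>b r (r - l) - b (r + 1) (r + 1 - l)\<bar> \<le> C / (real r + 1) ^ 2"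
begin

lemma b_nonneg: "0 \<le> b r k" using lt unfolding lt_stoch_def
  by (cases "k \<le> r") (auto simp: not_le)

lemma b_sum: "(\<Sum>k=0..r. b r k) = 1" using lt unfolding lt_stoch_def by auto

lemma b_sum_rev: "(\<Sum>l=0..r. b r (r - l)) = 1"
  using sum.atLeastAtMost_rev[of "b r" 0 r] b_sum[of r] by simp

lemma b_le1: "k \<le> r \<Longrightarrow> b r k \<le> 1"
proof -
  assume "k \<le> r"
  then have "b r k \<le> (\<Sum>k=0..r. b r k)"
    by (intro member_le_sum) (auto intro: b_nonneg)
  then show ?thesis using b_sum by simp
qed

lemma b_new: "b (Suc r) 0 \<le> C / (real r + 1)"
proof -
  have r1: "(real r + 1) > 0" by simp
  have "(\<Sum>k=0..Suc r. b (Suc r) k) = b (Suc r) 0 + (\<Sum>k=1..Suc r. b (Suc r) k)"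
    by (simp add: sum.atLeast_Suc_atMost)
  also have "(\<Sum>k=1..Suc r. b (Suc r) k) = (\<Sum>l=0..r. b (Suc r) (Suc r - l))"
  proof -
    have "(\<Sum>k=1..Suc r. b (Suc r) k) = (\<Sum>l=1..Suc r. b (Suc r) (Suc r + 1 - l))"
      using sum.atLeastAtMost_rev[of "b (Suc r)" 1 "Suc r"] by simp
    also have "\<dots> = (\<Sum>l=0..r. b (Suc r) (Suc r - l))"
      by (simp only: One_nat_def sum.shift_bounds_cl_Suc_ivl) simp
    finally show ?thesis .
  qed
  finally have e0: "(\<Sum>k=0..Suc r. b (Suc r) k) = b (Suc r) 0 + (\<Sum>l=0..r. b (Suc r) (Suc r - l))" .
  have e1: "1 = b (Suc r) 0 + (\<Sum>l=0..r. b (Suc r) (Suc r - l))" using e0 b_sum[of "Suc r"] by linarith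
  have "(\<Sum>l=0..r. b r (r - l)) - (\<Sum>l=0..r. b (Suc r) (Suc r - l)) \<le> (\<Sum>l=0..r. C / (real r + 1)^2)"
    unfolding sum_subtractf[symmetric]
    by (intro sum_mono) (use bc in \<open>auto dest!: spec[of _ r] simp: Suc_diff_le abs_le_iff\<close>)
  also have "\<dots> = C / (real r + 1)" by (rule sq_cancel)
  finally show ?thesis using e1 b_sum_rev[of r] by linarith
qed

lemma C_nonneg: "0 \<le> C"
proof -
  have "\<bar>b 0 0 - b 1 1\<bar> \<le> C / 1" using bc by (auto dest!: spec[of _ 0])
  then show ?thesis by linarith
qed

definition PP :: "(nat \<Rightarrow> real) \<Rightarrow> nat \<Rightarrow> real" where
  "PP g r = (\<Sum>l=0..r. b r (r - l) * g l)"

lemma PP_bound: assumes "\<And>l. \<bar>g l\<bar> \<le> 1" shows "\<bar>PP g r\<bar> \<le> 1"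
proof -
  have "\<bar>PP g r\<bar> \<le> (\<Sum>l=0..r. \<bar>b r (r - l) * g l\<bar>)" unfolding PP_def by (rule sum_abs)
  also have "\<dots> \<le> (\<Sum>l=0..r. b r (r - l))"
    by (intro sum_mono) (auto simp: abs_mult b_nonneg intro: mult_left_le assms)
  finally show ?thesis using b_sum_rev by simp
qed

lemma PP_diff: assumes "\<And>l. \<bar>g l\<bar> \<le> 1" shows "\<bar>PP g (Suc r) - PP g r\<bar> \<le> 2 * C / (real r + 1)"
proof -
  have "PP g (Suc r) = (\<Sum>l=0..r. b (Suc r) (Suc r - l) * g l) + b (Suc r) 0 * g (Suc r)"
    unfolding PP_def by simp
  then have "PP g (Suc r) - PP g r = (\<Sum>l=0..r. (b (Suc r) (Suc r - l) - b r (r - l)) * g l) + b (Suc r) 0 * g (Suc r)"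
    unfolding PP_def by (simp add: sum_subtractf left_diff_distrib)
  then have "\<bar>PP g (Suc r) - PP g r\<bar> \<le> (\<Sum>l=0..r. \<bar>(b (Suc r) (Suc r - l) - b r (r - l)) * g l\<bar>) + \<bar>b (Suc r) 0 * g (Suc r)\<bar>"
    using abs_triangle_ineq[of "\<Sum>l=0..r. (b (Suc r) (Suc r - l) - b r (r - l)) * g l" "b (Suc r) 0 * g (Suc r)"]
      sum_abs[of "\<lambda>l. (b (Suc r) (Suc r - l) - b r (r - l)) * g l" "{0..r}"] by linarith
  also have "(\<Sum>l=0..r. \<bar>(b (Suc r) (Suc r - l) - b r (r - l)) * g l\<bar>) \<le> (\<Sum>l=0..r. C / (real r + 1)^2)"
  proof (intro sum_mono)
    fix l assume l: "l \<in> {0..r}"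
    have "\<bar>b (Suc r) (Suc r - l) - b r (r - l)\<bar> \<le> C / (real r + 1)^2"
    proof -
      have "\<bar>b r (r - l) - b (r + 1) (r + 1 - l)\<bar> \<le> C / (real r + 1)^2" using bc l by auto
      then show ?thesis by (simp add: abs_minus_commute)
    qed
    then show "\<bar>(b (Suc r) (Suc r - l) - b r (r - l)) * g l\<bar> \<le> C / (real r + 1)^2"
      unfolding abs_mult using assms[of l]
      by (metis abs_ge_zero mult_left_le order_trans)
  qed
  also have "(\<Sum>l=0..r. C / (real r + 1)^2) = C / (real r + 1)" by (rule sq_cancel)
  also have "\<bar>b (Suc r) 0 * g (Suc r)\<bar> \<le> C / (real r + 1)"
    unfolding abs_mult using b_new[of r] assms[of "Suc r"] b_nonneg[of "Suc r" 0]
    by (metis abs_of_nonneg mult_left_le order_trans)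
  finally show ?thesis by simp
qed

lemma c_decomp: "(\<Sum>k=0..r. b r k * cos ((real k + 1/2) * t)) =
   cos ((real r + 1/2) * t) * PP (\<lambda>l. cos (real l * t)) r + sin ((real r + 1/2) * t) * PP (\<lambda>l. sin (real l * t)) r"
proof -
  have "(\<Sum>k=0..r. b r k * cos ((real k + 1/2) * t)) = (\<Sum>l=0..r. b r (r - l) * cos ((real (r - l) + 1/2) * t))"
    using sum.atLeastAtMost_rev[of "\<lambda>k. b r k * cos ((real k + 1/2) * t)" 0 r] by simp
  also have "\<dots> = (\<Sum>l=0..r. b r (r - l) * (cos ((real r + 1/2) * t) * cos (real l * t) + sin ((real r + 1/2) * t) * sin (real l * t)))"
  proof (intro sum.cong refl)
    fix l assume "l \<in> {0..r}"
    then have "(real (r - l) + 1/2) * t = (real r + 1/2) * t - real l * t" by (simp add: of_nat_diff algebra_simps)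
    then show "b r (r - l) * cos ((real (r - l) + 1/2) * t) = b r (r - l) * (cos ((real r + 1/2) * t) * cos (real l * t) + sin ((real r + 1/2) * t) * sin (real l * t))"
      by (simp add: cos_diff)
  qed
  also have "\<dots> = cos ((real r + 1/2) * t) * PP (\<lambda>l. cos (real l * t)) r + sin ((real r + 1/2) * t) * PP (\<lambda>l. sin (real l * t)) r"
    unfolding PP_def by (simp add: sum_distrib_left sum.distrib algebra_simps)
  finally show ?thesis .
qed

lemma c_bound: "\<bar>\<Sum>k=0..r. b r k * cos ((real k + 1/2) * t)\<bar> \<le> 1"
proof -
  have "\<bar>\<Sum>k=0..r. b r k * cos ((real k + 1/2) * t)\<bar> \<le> (\<Sum>k=0..r. \<bar>b r k * cos ((real k + 1/2) * t)\<bar>)" by (rule sum_abs)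
  also have "\<dots> \<le> (\<Sum>k=0..r. b r k)"
    by (intro sum_mono) (auto simp: abs_mult b_nonneg intro: mult_left_le)
  finally show ?thesis using b_sum by simp
qed

lemma abel_part:
  assumes "m \<le> n" and s: "0 < sin (t/2)" and g: "\<And>l. \<bar>g l\<bar> \<le> 1"
    and Eb: "\<And>r. m \<le> r \<Longrightarrow> \<bar>\<Sum>s=m..r. \<alpha> s\<bar> \<le> 1 / sin (t/2)"
  shows "\<bar>\<Sum>r=m..n. \<alpha> r * PP g r\<bar> \<le> (1 / sin (t/2)) * (1 + 2 * C * (\<Sum>r=m..n. 1 / (real r + 1)))"
proof -
  have "\<bar>\<Sum>r=m..n. \<alpha> r * PP g r\<bar> \<le> (1 / sin (t/2)) * (\<bar>PP g n\<bar> + (\<Sum>r=m..<n. \<bar>PP g (Suc r) - PP g r\<bar>))"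
    using Eb by (intro abel_bound assms) auto
  also have "\<dots> \<le> (1 / sin (t/2)) * (1 + 2 * C * (\<Sum>r=m..n. 1 / (real r + 1)))"
  proof (intro mult_left_mono add_mono)
    show "\<bar>PP g n\<bar> \<le> 1" using PP_bound g by blast
    have "(\<Sum>r=m..<n. \<bar>PP g (Suc r) - PP g r\<bar>) \<le> (\<Sum>r=m..<n. 2 * C * (1 / (real r + 1)))"
      using PP_diff[OF g] by (intro sum_mono) simp
    also have "\<dots> \<le> (\<Sum>r=m..n. 2 * C * (1 / (real r + 1)))"
      using C_nonneg by (intro sum_mono2) auto
    finally show "(\<Sum>r=m..<n. \<bar>PP g (Suc r) - PP g r\<bar>) \<le> 2 * C * (\<Sum>r=m..n. 1 / (real r + 1))"
      by (simp add: sum_distrib_left)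
  qed (use s in auto)
  finally show ?thesis .
qed

lemma kernel_bound:
  assumes s: "0 < sin (t/2)" and m: "m \<le> Suc n"
  shows "\<bar>\<Sum>r=0..n. \<Sum>k=0..r. b r k * cos ((real k + 1/2) * t)\<bar>
     \<le> real m + (2 / sin (t/2)) * (1 + 2 * C * (\<Sum>r=m..n. 1 / (real r + 1)))"
proof -
  define c where "c r = (\<Sum>k=0..r. b r k * cos ((real k + 1/2) * t))" for r
  have nn: "0 \<le> (2 / sin (t/2)) * (1 + 2 * C * (\<Sum>r=m..n. 1 / (real r + 1)))"
    using s C_nonneg by (intro mult_nonneg_nonneg add_nonneg_nonneg sum_nonneg) auto
  have low: "\<bar>\<Sum>r=0..<m. c r\<bar> \<le> real m"
  proof -
    have "\<bar>\<Sum>r=0..<m. c r\<bar> \<le> (\<Sum>r=0..<m. \<bar>c r\<bar>)" by (rule sum_abs)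
    also have "\<dots> \<le> (\<Sum>r=0..<m. 1)" unfolding c_def by (intro sum_mono c_bound)
    finally show ?thesis by simp
  qed
  show ?thesis
  proof (cases "m = Suc n")
    case True
    then have "(\<Sum>r=0..n. c r) = (\<Sum>r=0..<m. c r)" by (simp add: atLeastLessThanSuc_atLeastAtMost)
    then show ?thesis using low nn unfolding c_def by linarith
  next
    case False
    then have mn: "m \<le> n" using m by simp
    have split: "(\<Sum>r=0..n. c r) = (\<Sum>r=0..<m. c r) + (\<Sum>r=m..n. c r)"
      using mn by (metis atLeast0AtMost atLeast0LessThan le_SucI sum.atLeastLessThan_concat atLeastLessThanSuc_atLeastAtMost zero_le)
    have E1: "\<bar>\<Sum>s=m..r. cos ((real s + 1/2) * t)\<bar> \<le> 1 / sin (t/2)" if "m \<le> r" for r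
    proof -
      have "2 * sin (t/2) * (\<Sum>s=m..<Suc r. cos ((real s + 1/2) * t)) = sin (real (Suc r) * t) - sin (real m * t)"
        using that by (intro cos_psum) simp
      then have "\<bar>2 * sin (t/2) * (\<Sum>s=m..r. cos ((real s + 1/2) * t))\<bar> \<le> 2"
        by (simp add: atLeastLessThanSuc_atLeastAtMost del: sum.cl_ivl_Suc)
          (smt (verit) sin_ge_minus_one sin_le_one)
      then have "2 * sin (t/2) * \<bar>\<Sum>s=m..r. cos ((real s + 1/2) * t)\<bar> \<le> 2"
        using s by (simp add: abs_mult)
      then show ?thesis using s by (simp add: field_simps)
    qed
    have E2: "\<bar>\<Sum>s=m..r. sin ((real s + 1/2) * t)\<bar> \<le> 1 / sin (t/2)" if "m \<le> r" for r
    proof -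
      have "2 * sin (t/2) * (\<Sum>s=m..<Suc r. sin ((real s + 1/2) * t)) = cos (real m * t) - cos (real (Suc r) * t)"
        using that by (intro sin_psum) simp
      then have "\<bar>2 * sin (t/2) * (\<Sum>s=m..r. sin ((real s + 1/2) * t))\<bar> \<le> 2"
        by (simp add: atLeastLessThanSuc_atLeastAtMost del: sum.cl_ivl_Suc)
          (smt (verit) cos_ge_minus_one cos_le_one)
      then have "2 * sin (t/2) * \<bar>\<Sum>s=m..r. sin ((real s + 1/2) * t)\<bar> \<le> 2"
        using s by (simp add: abs_mult)
      then show ?thesis using s by (simp add: field_simps)
    qed
    define A where "A = (\<Sum>r=m..n. cos ((real r + 1/2) * t) * PP (\<lambda>l. cos (real l * t)) r)"
    define B where "B = (\<Sum>r=m..n. sin ((real r + 1/2) * t) * PP (\<lambda>l. sin (real l * t)) r)"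
    define X where "X = (1 / sin (t/2)) * (1 + 2 * C * (\<Sum>r=m..n. 1 / (real r + 1)))"
    have cs: "(\<Sum>r=m..n. c r) = A + B"
      unfolding A_def B_def c_def c_decomp sum.distrib ..
    have "\<bar>A\<bar> \<le> X" unfolding A_def X_def
      by (intro abel_part mn s E1) auto
    moreover have "\<bar>B\<bar> \<le> X" unfolding B_def X_def
      by (intro abel_part mn s E2) auto
    ultimately have "\<bar>\<Sum>r=m..n. c r\<bar> \<le> 2 * X" unfolding cs
      using abs_triangle_ineq[of A B] by linarith
    then have "\<bar>\<Sum>r=m..n. c r\<bar> \<le> 2 * ((1 / sin (t/2)) * (1 + 2 * C * (\<Sum>r=m..n. 1 / (real r + 1))))"
      unfolding X_def .
    then have "\<bar>\<Sum>r=m..n. c r\<bar> \<le> (2 / sin (t/2)) * (1 + 2 * C * (\<Sum>r=m..n. 1 / (real r + 1)))"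
      by simp
    then show ?thesis using low split unfolding c_def by linarith
  qed
qed

end

lemmas hk_integral_combine = Henstock_Kurzweil_Integration.integral_combine

lemma abs_int_shift:
  fixes g :: "real \<Rightarrow> real"
  assumes "g absolutely_integrable_on {a+c..b+c}"
  shows "(\<lambda>t. g (t + c)) absolutely_integrable_on {a..b}"
proof -
  have "(g \<circ> (+) c) integrable_on {a..b}" "((\<lambda>x. norm (g x)) \<circ> (+) c) integrable_on {a..b}"
    using assms unfolding absolutely_integrable_on_def integrable_on_shift_Icc_real by auto
  then show ?thesis unfolding absolutely_integrable_on_def by (simp add: o_def add.commute)
qed

lemma integral_shift:
  fixes g :: "real \<Rightarrow> real"
  assumes "g integrable_on {a+c..b+c}"
  shows "integral {a..b} (\<lambda>t. g (t + c)) = integral {a+c..b+c} g"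
proof -
  have "(g has_integral integral {a+c..b+c} g) {a+c..b+c}" using assms by blast
  then have "((g \<circ> (+) c) has_integral integral {a+c..b+c} g) {a..b}"
    unfolding has_integral_shift_Icc_real .
  then show ?thesis by (simp add: o_def add.commute integral_unique)
qed

lemma periodic_nat: assumes "\<forall>x. f (x + 2 * pi) = f x"
  shows "f (x + real N * (2 * pi)) = f x" "f (x - real N * (2 * pi)) = f x"
proof -
  show "f (x + real N * (2 * pi)) = f x"
  proof (induction N)
    case (Suc N)
    have "f (x + real (Suc N) * (2 * pi)) = f ((x + real N * (2 * pi)) + 2 * pi)" by (simp add: algebra_simps)
    then show ?case using assms Suc by simp
  qed simp
  show "f (x - real N * (2 * pi)) = f x"
  proof (induction N)
    case (Suc N)
    have "f (x - real N * (2 * pi)) = f ((x - real (Suc N) * (2 * pi)) + 2 * pi)" by (simp add: algebra_simps)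
    then show ?case using assms Suc by simp
  qed simp
qed

lemma L1_abs_int:
  assumes "L1_periodic f"
  shows "f absolutely_integrable_on {a..b}"
proof -
  have per: "\<forall>x. f (x + 2 * pi) = f x" and base: "f absolutely_integrable_on {-pi..pi}"
    using assms unfolding L1_periodic_def by auto
  have big: "f absolutely_integrable_on {-pi - real N * (2*pi) .. pi + real N * (2*pi)}" for N
  proof (induction N)
    case 0 then show ?case using base by simp
  next
    case (Suc N)
    define c where "c = real (Suc N) * (2*pi)"
    have Np: "0 \<le> real N * (2*pi)" by simp
    have cN: "c = real N * (2*pi) + 2 * pi" by (simp add: c_def algebra_simps)
    have up: "f absolutely_integrable_on {pi + real N * (2*pi) .. pi + c}"
    proof -
      have "(\<lambda>t. f (t + - c)) absolutely_integrable_on {pi + real N * (2*pi) .. pi + c}"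
        by (rule abs_int_shift) (use base in \<open>simp add: c_def algebra_simps\<close>)
      moreover have "(\<lambda>t. f (t + - c)) = f"
      proof
        fix t show "f (t + - c) = f t" using periodic_nat(2)[OF per, of t "Suc N"] by (simp add: c_def)
      qed
      ultimately show ?thesis by simp
    qed
    have lo: "f absolutely_integrable_on {-pi - c .. -pi - real N * (2*pi)}"
    proof -
      have "(\<lambda>t. f (t + c)) absolutely_integrable_on {-pi - c .. -pi - real N * (2*pi)}"
        by (rule abs_int_shift) (use base in \<open>simp add: c_def algebra_simps\<close>)
      moreover have "(\<lambda>t. f (t + c)) = f"
      proof
        fix t show "f (t + c) = f t" using periodic_nat(1)[OF per, of t "Suc N"] by (simp add: c_def)
      qed
      ultimately show ?thesis by simp
    qed
    have "f absolutely_integrable_on {-pi - real N * (2*pi) .. pi + c}"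
      by (rule absolutely_integrable_on_combine[OF Suc up]) (use Np pi_gt_zero in \<open>auto simp: cN\<close>)
    then have "f absolutely_integrable_on {-pi - c .. pi + c}"
      by (rule absolutely_integrable_on_combine[OF lo]) (use Np pi_gt_zero in \<open>auto simp: cN\<close>)
    then show ?case by (simp add: c_def)
  qed
  obtain N :: nat where N: "real N \<ge> \<bar>a\<bar> + \<bar>b\<bar>" using real_arch_simple by blast
  have "{a..b} \<subseteq> {-pi - real N * (2*pi) .. pi + real N * (2*pi)}"
  proof -
    have "real N \<le> real N * (2*pi)" using pi_gt3 by (simp add: mult_le_cancel_left1 real_of_nat_ge_one_iff)
    then have "\<bar>a\<bar> \<le> real N * (2*pi)" "\<bar>b\<bar> \<le> real N * (2*pi)" using N by linarith+
    then have "-pi - real N * (2*pi) \<le> a" "b \<le> pi + real N * (2*pi)" using pi_gt_zero abs_le_iff by linarith+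
    then show ?thesis by auto
  qed
  then show ?thesis using big absolutely_integrable_on_subinterval by blast
qed

lemma abs_int_mult_cont:
  fixes g k :: "real \<Rightarrow> real"
  assumes "g absolutely_integrable_on {a..b}" "continuous_on {a..b} k"
  shows "(\<lambda>t. k t * g t) absolutely_integrable_on {a..b}"
proof (rule absolutely_integrable_bounded_measurable_product_real)
  show "k \<in> borel_measurable (lebesgue_on {a..b})"
    using assms by (intro continuous_imp_measurable_on_sets_lebesgue) auto
  show "bounded (k ` {a..b})"
    using assms by (intro compact_imp_bounded compact_continuous_image) auto
qed (use assms in auto)

lemma abs_int_mult_cont':
  fixes g k :: "real \<Rightarrow> real"
  assumes "g absolutely_integrable_on {a..b}" "continuous_on {a..b} k"
  shows "(\<lambda>t. g t * k t) absolutely_integrable_on {a..b}"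
  using abs_int_mult_cont[OF assms] by (simp add: mult.commute)

lemma psi_abs_int:
  assumes "L1_periodic f"
  shows "psi f x absolutely_integrable_on {a..b}"
proof -
  have 1: "(\<lambda>t. f (t + x)) absolutely_integrable_on {a..b}"
    by (rule abs_int_shift) (rule L1_abs_int[OF assms])
  have "(\<lambda>t. f (t + x)) absolutely_integrable_on {-b..-a}"
    by (rule abs_int_shift) (rule L1_abs_int[OF assms])
  then have 2: "(\<lambda>t. f (-t + x)) absolutely_integrable_on {a..b}"
    using absolutely_integrable_reflect_real[where f="\<lambda>t. f (t + x)" and a="-b" and b="-a"] by simp
  have "(\<lambda>t. f (t + x) - f (-t + x)) absolutely_integrable_on {a..b}"
    by (rule set_integral_diff(1)[OF 1 2])
  then show ?thesis unfolding psi_def[abs_def] by (simp add: add.commute)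
qed

lemma periodic_integral_step:
  fixes h :: "real \<Rightarrow> real"
  assumes per: "\<And>u. h (u + p) = h u" and int: "\<And>a b. h integrable_on {a..b}"
    and "a \<le> d" "d \<le> a + p"
  shows "integral {a..a+p} h = integral {d..d+p} h"
proof -
  have "integral {a..a+p} h = integral {a..d} h + integral {d..a+p} h"
    using assms by (intro hk_integral_combine[symmetric] int) auto
  moreover have "integral {d..d+p} h = integral {d..a+p} h + integral {a+p..d+p} h"
    using assms by (intro hk_integral_combine[symmetric] int) auto
  moreover have "integral {a+p..d+p} h = integral {a..d} h"
    using integral_shift[of h a p d] int per by simp
  ultimately show ?thesis by simp
qed

lemma periodic_integral:
  fixes h :: "real \<Rightarrow> real"
  assumes per: "\<And>u. h (u + p) = h u" and int: "\<And>a b. h integrable_on {a..b}" and p: "p > 0"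
  shows "integral {a..a+p} h = integral {b..b+p} h"
proof -
  have iter: "integral {a..a+p} h = integral {a + real n * d..a + real n * d + p} h"
    if "0 \<le> d" "d \<le> p" for a d and n :: nat
  proof (induction n)
    case (Suc n)
    have "integral {a + real n * d..a + real n * d + p} h = integral {(a + real n * d) + d..(a + real n * d) + d + p} h"
      using that by (intro periodic_integral_step per int) auto
    then show ?case using Suc by (simp add: algebra_simps)
  qed simp
  have gen: "integral {a..a+p} h = integral {b..b+p} h" if "a \<le> b" for a b
  proof -
    obtain n :: nat where n: "real n \<ge> (b - a) / p + 1" using real_arch_simple by blast
    have npos: "real n > 0" using n that p by (smt (verit) divide_nonneg_pos)
    define d where "d = (b - a) / real n"
    have d0: "0 \<le> d" using that npos by (simp add: d_def)
    have "(b - a) / p \<le> real n" using n by simp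
    then have "b - a \<le> real n * p" using p by (simp add: divide_le_eq mult.commute)
    then have dp: "d \<le> p" using npos by (simp add: d_def divide_le_eq mult.commute)
    have "a + real n * d = b" using npos by (simp add: d_def)
    then show ?thesis using iter[OF d0 dp, of a n] by simp
  qed
  show ?thesis
  proof (cases "a \<le> b")
    case True then show ?thesis by (rule gen)
  next
    case False then have "b \<le> a" by simp
    then show ?thesis using gen[of b a] by simp
  qed
qed

definition Dk :: "nat \<Rightarrow> real \<Rightarrow> real" where "Dk k t = (\<Sum>\<nu>=1..k. sin (real \<nu> * t))"

lemma f_int: assumes "L1_periodic f" and "continuous_on {a..b} k"
  shows "(\<lambda>t. f (t + c) * k t) integrable_on {a..b}"
proof -
  have "(\<lambda>t. f (t + c)) absolutely_integrable_on {a..b}"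
    by (rule abs_int_shift) (rule L1_abs_int[OF assms(1)])
  then have "(\<lambda>t. f (t + c) * k t) absolutely_integrable_on {a..b}"
    by (rule abs_int_mult_cont'[OF _ assms(2)])
  then show ?thesis using set_lebesgue_integral_eq_integral(1) by blast
qed

lemma f_int0: assumes "L1_periodic f" and "continuous_on {a..b} k"
  shows "(\<lambda>t. f t * k t) integrable_on {a..b}"
  using f_int[OF assms, of 0] by simp

lemma psi_int: assumes "L1_periodic f" and "continuous_on {a..b} k"
  shows "(\<lambda>t. psi f x t * k t) integrable_on {a..b}"
  using abs_int_mult_cont'[OF psi_abs_int[OF assms(1)] assms(2)] set_lebesgue_integral_eq_integral(1) by blast

lemma conj_term:
  assumes L: "L1_periodic f"
  shows "fourier_a f \<nu> * sin (real \<nu> * x) - fourier_b f \<nu> * cos (real \<nu> * x)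
     = -(1/pi) * integral {0..pi} (\<lambda>t. psi f x t * sin (real \<nu> * t))"
proof -
  have per: "\<forall>x. f (x + 2 * pi) = f x" using L unfolding L1_periodic_def by auto
  define h where "h u = f u * sin (real \<nu> * (x - u))" for u
  have ia: "(\<lambda>u. f u * cos (real \<nu> * u)) integrable_on {-pi..pi}"
    by (intro f_int0 L continuous_intros)
  have ib: "(\<lambda>u. f u * sin (real \<nu> * u)) integrable_on {-pi..pi}"
    by (intro f_int0 L continuous_intros)
  have "fourier_a f \<nu> * sin (real \<nu> * x) - fourier_b f \<nu> * cos (real \<nu> * x)
      = (1/pi) * (integral {-pi..pi} (\<lambda>u. f u * cos (real \<nu> * u) * sin (real \<nu> * x))
                 - integral {-pi..pi} (\<lambda>u. f u * sin (real \<nu> * u) * cos (real \<nu> * x)))"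
    unfolding fourier_a_def fourier_b_def integral_mult_left by (simp add: algebra_simps)
  also have "\<dots> = (1/pi) * integral {-pi..pi} (\<lambda>u. f u * cos (real \<nu> * u) * sin (real \<nu> * x) - f u * sin (real \<nu> * u) * cos (real \<nu> * x))"
    by (subst integral_diff) (auto intro: integrable_on_mult_left ia ib)
  also have "(\<lambda>u. f u * cos (real \<nu> * u) * sin (real \<nu> * x) - f u * sin (real \<nu> * u) * cos (real \<nu> * x)) = h"
  proof
    fix u
    have "sin (real \<nu> * (x - u)) = sin (real \<nu> * x - real \<nu> * u)" by (simp add: algebra_simps)
    then show "f u * cos (real \<nu> * u) * sin (real \<nu> * x) - f u * sin (real \<nu> * u) * cos (real \<nu> * x) = h u"
      unfolding h_def by (simp add: sin_diff algebra_simps)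
  qed
  also have hper: "\<And>u. h (u + 2*pi) = h u"
  proof -
    fix u
    have "sin (real \<nu> * (x - (u + 2*pi))) = sin (real \<nu> * (x - u) - real \<nu> * (2 * pi))"
      by (simp add: algebra_simps)
    also have "\<dots> = sin (real \<nu> * (x - u))"
      by (rule periodic_nat(2)[of sin]) simp
    finally show "h (u + 2*pi) = h u" unfolding h_def using per by simp
  qed
  have hint: "\<And>a b. h integrable_on {a..b}"
    unfolding h_def by (intro f_int0[OF L] continuous_intros)
  have "integral {-pi..pi} h = integral {-pi..-pi + 2*pi} h" by simp
  also have "\<dots> = integral {(-pi + x)..(-pi + x) + 2*pi} h"
    by (rule periodic_integral[OF hper hint]) simp
  also have "\<dots> = integral {-pi..pi} (\<lambda>t. h (t + x))"
    using integral_shift[of h "-pi" x pi] hint by (simp add: algebra_simps)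
  also have "(\<lambda>t. h (t + x)) = (\<lambda>t. - (f (t + x) * sin (real \<nu> * t)))"
    unfolding h_def by (auto simp: algebra_simps)
  also have "integral {-pi..pi} (\<lambda>t. - (f (t + x) * sin (real \<nu> * t))) = - integral {-pi..pi} (\<lambda>t. f (t + x) * sin (real \<nu> * t))"
    by (rule integral_neg)
  also have "integral {-pi..pi} (\<lambda>t. f (t + x) * sin (real \<nu> * t))
      = integral {-pi..0} (\<lambda>t. f (t + x) * sin (real \<nu> * t)) + integral {0..pi} (\<lambda>t. f (t + x) * sin (real \<nu> * t))"
    by (rule hk_integral_combine[symmetric]) (auto intro!: f_int L continuous_intros)
  also have "integral {-pi..0} (\<lambda>t. f (t + x) * sin (real \<nu> * t)) = integral {0..pi} (\<lambda>t. - (f (x - t) * sin (real \<nu> * t)))"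
    using Henstock_Kurzweil_Integration.integral_reflect_real[of 0 "-pi" "\<lambda>t. f (t + x) * sin (real \<nu> * t)"] by (simp add: algebra_simps)
  also have "integral {0..pi} (\<lambda>t. - (f (x - t) * sin (real \<nu> * t))) + integral {0..pi} (\<lambda>t. f (t + x) * sin (real \<nu> * t))
      = integral {0..pi} (\<lambda>t. psi f x t * sin (real \<nu> * t))"
  proof -
    have i1: "(\<lambda>t. f (-t + x) * sin (real \<nu> * t)) integrable_on {0..pi}"
    proof -
      have "(\<lambda>t. f (t + x)) absolutely_integrable_on {-pi..0}"
        by (rule abs_int_shift) (rule L1_abs_int[OF L])
      then have "(\<lambda>t. f (-t + x)) absolutely_integrable_on {0..pi}"
        using absolutely_integrable_reflect_real[where f="\<lambda>t. f (t + x)" and a="-pi" and b="0"] by simp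
      then have "(\<lambda>t. f (-t + x) * sin (real \<nu> * t)) absolutely_integrable_on {0..pi}"
        by (rule abs_int_mult_cont') (intro continuous_intros)
      then show ?thesis using set_lebesgue_integral_eq_integral(1) by blast
    qed
    have i2: "(\<lambda>t. f (t + x) * sin (real \<nu> * t)) integrable_on {0..pi}"
      by (intro f_int L continuous_intros)
    have "integral {0..pi} (\<lambda>t. - (f (x - t) * sin (real \<nu> * t))) = - integral {0..pi} (\<lambda>t. f (-t + x) * sin (real \<nu> * t))"
      using integral_neg[of "{0..pi}" "\<lambda>t. f (-t + x) * sin (real \<nu> * t)"] by (simp add: algebra_simps)
    moreover have "integral {0..pi} (\<lambda>t. psi f x t * sin (real \<nu> * t)) = integral {0..pi} (\<lambda>t. f (t + x) * sin (real \<nu> * t)) - integral {0..pi} (\<lambda>t. f (-t + x) * sin (real \<nu> * t))"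
      using integral_diff[OF i2 i1] unfolding psi_def by (simp add: algebra_simps)
    ultimately show ?thesis by simp
  qed
  finally show ?thesis by simp
qed

lemma conj_partial_sum_int:
  assumes L: "L1_periodic f"
  shows "conj_partial_sum f k x = -(1/pi) * integral {0..pi} (\<lambda>t. psi f x t * Dk k t)"
proof -
  have "conj_partial_sum f k x = (\<Sum>\<nu>=1..k. -(1/pi) * integral {0..pi} (\<lambda>t. psi f x t * sin (real \<nu> * t)))"
    unfolding conj_partial_sum_def using conj_term[OF L] by simp
  also have "\<dots> = -(1/pi) * (\<Sum>\<nu>=1..k. integral {0..pi} (\<lambda>t. psi f x t * sin (real \<nu> * t)))"
    by (simp add: sum_distrib_left)
  also have "(\<Sum>\<nu>=1..k. integral {0..pi} (\<lambda>t. psi f x t * sin (real \<nu> * t))) = integral {0..pi} (\<lambda>t. \<Sum>\<nu>=1..k. psi f x t * sin (real \<nu> * t))"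
    by (rule Henstock_Kurzweil_Integration.integral_sum[symmetric]) (auto intro!: psi_int L continuous_intros)
  finally show ?thesis unfolding Dk_def by (simp add: sum_distrib_left)
qed

definition Kn :: "(nat \<Rightarrow> nat \<Rightarrow> real) \<Rightarrow> nat \<Rightarrow> real \<Rightarrow> real" where
  "Kn b n t = (\<Sum>r=0..n. \<Sum>k=0..r. cesaro n r * b r k * Dk k t)"

lemma cont_Kn: "continuous_on S (Kn b n)"
  unfolding Kn_def Dk_def by (intro continuous_intros)

lemma T_conj_int:
  assumes L: "L1_periodic f"
  shows "T_conj cesaro b f n x = -(1/pi) * integral {0..pi} (\<lambda>t. psi f x t * Kn b n t)"
proof -
  have ii: "(\<lambda>t. psi f x t * Dk k t) integrable_on {0..pi}" for k
    unfolding Dk_def by (intro psi_int L continuous_intros)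
  have "T_conj cesaro b f n x = -(1/pi) * (\<Sum>r=0..n. \<Sum>k=0..r. cesaro n r * b r k * integral {0..pi} (\<lambda>t. psi f x t * Dk k t))"
    unfolding T_conj_def conj_partial_sum_int[OF L] by (simp add: sum_distrib_left algebra_simps)
  also have "(\<Sum>r=0..n. \<Sum>k=0..r. cesaro n r * b r k * integral {0..pi} (\<lambda>t. psi f x t * Dk k t))
     = (\<Sum>r=0..n. \<Sum>k=0..r. integral {0..pi} (\<lambda>t. psi f x t * (cesaro n r * b r k * Dk k t)))"
  proof (intro sum.cong refl)
    fix r k
    have "(\<lambda>t. psi f x t * (cesaro n r * b r k * Dk k t)) = (\<lambda>t. (cesaro n r * b r k) * (psi f x t * Dk k t))"
      by (auto simp: algebra_simps)
    then show "cesaro n r * b r k * integral {0..pi} (\<lambda>t. psi f x t * Dk k t) = integral {0..pi} (\<lambda>t. psi f x t * (cesaro n r * b r k * Dk k t))"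
      by (simp only: Henstock_Kurzweil_Integration.integral_mult_right)
  qed
  also have "\<dots> = (\<Sum>r=0..n. integral {0..pi} (\<lambda>t. \<Sum>k=0..r. psi f x t * (cesaro n r * b r k * Dk k t)))"
    by (intro sum.cong refl Henstock_Kurzweil_Integration.integral_sum[symmetric]) (auto intro!: psi_int L continuous_intros simp: Dk_def)
  also have "\<dots> = integral {0..pi} (\<lambda>t. \<Sum>r=0..n. \<Sum>k=0..r. psi f x t * (cesaro n r * b r k * Dk k t))"
    by (intro Henstock_Kurzweil_Integration.integral_sum[symmetric] integrable_sum) (auto intro!: psi_int L continuous_intros simp: Dk_def)
  finally show ?thesis unfolding Kn_def by (simp add: sum_distrib_left)
qed

definition HH :: "nat \<Rightarrow> nat \<Rightarrow> real" where "HH n j = (\<Sum>r=j..n. 1 / (real r + 1))"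

lemma HH_nonneg: "0 \<le> HH n j" unfolding HH_def by (intro sum_nonneg) auto

lemma HH_half: assumes "i \<le> n div 2" shows "1/2 \<le> HH n i"
proof -
  have "(\<Sum>r=i..n. 1 / (real n + 1)) \<le> HH n i"
    unfolding HH_def by (intro sum_mono) (auto simp: frac_le)
  moreover have "(\<Sum>r=i..n. 1 / (real n + 1)) = real (Suc n - i) / (real n + 1)" by simp
  moreover have "1/2 \<le> real (Suc n - i) / (real n + 1)"
  proof -
    have "2 * i \<le> n" using assms by linarith
    then have "real n + 1 \<le> 2 * real (Suc n - i)" by linarith
    then show ?thesis by (simp add: field_simps)
  qed
  ultimately show ?thesis by linarith
qed

lemma HH_step: "1 \<le> j \<Longrightarrow> HH n j \<le> HH n (j - 1)"
  unfolding HH_def by (intro sum_mono2) auto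

lemma gauss_sum: "(\<Sum>k=0..n. real k + 1) = (real n + 1) * (real n + 2) / 2"
  by (induction n) (auto simp: field_simps)

lemma div2_sum: "(\<Sum>k=0..Suc (2*N). g (k div 2)) = 2 * (\<Sum>i=0..N. (g i :: real))"
proof (induction N)
  case 0 then show ?case by (simp add: numeral_2_eq_2)
next
  case (Suc N)
  have e: "Suc (2 * Suc N) = Suc (Suc (Suc (2*N)))" by simp
  have "(Suc (Suc (2*N))) div 2 = Suc N" "(Suc (Suc (Suc (2*N)))) div 2 = Suc N" by presburger+
  then show ?case unfolding e using Suc by simp
qed

context
  fixes W :: "nat \<Rightarrow> real" and n :: nat
  assumes Wnn: "\<And>k. 0 \<le> W k"
    and Wmon: "\<And>k j. k \<le> j \<Longrightarrow> W j * (real k + 1) \<le> W k * (real j + 1)"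
begin

lemma W_last: "W n \<le> (2 / (real n + 1)) * (\<Sum>k=0..n. W k)"
proof -
  have "(\<Sum>k=0..n. W n * ((real k + 1) / (real n + 1))) \<le> (\<Sum>k=0..n. W k)"
  proof (intro sum_mono)
    fix k assume "k \<in> {0..n}"
    then have "W n * (real k + 1) \<le> W k * (real n + 1)" using Wmon by auto
    then show "W n * ((real k + 1) / (real n + 1)) \<le> W k" by (simp add: field_simps)
  qed
  moreover have "(\<Sum>k=0..n. W n * ((real k + 1) / (real n + 1))) = W n * ((real n + 2) / 2)"
  proof -
    have "(\<Sum>k=0..n. (real k + 1) / (real n + 1)) = ((real n + 1) * (real n + 2) / 2) / (real n + 1)"
      unfolding sum_divide_distrib[symmetric] gauss_sum ..
    also have "\<dots> = (real n + 2) / 2" by (simp add: field_simps)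
    finally show ?thesis unfolding sum_distrib_left[symmetric] by simp
  qed
  ultimately have "W n * ((real n + 2) / 2) \<le> (\<Sum>k=0..n. W k)" by simp
  moreover have "W n * ((real n + 1) / 2) \<le> W n * ((real n + 2) / 2)"
    using Wnn by (intro mult_left_mono) auto
  ultimately have "W n * (real n + 1) \<le> 2 * (\<Sum>k=0..n. W k)" by simp
  then show ?thesis by (simp add: field_simps)
qed

lemma W_sum: "(\<Sum>k=0..n. W k) \<le> 8 * (\<Sum>k=0..n. W k * HH n k)"
proof -
  have "(\<Sum>k=0..n. W k) \<le> (\<Sum>k=0..n. 2 * W (k div 2))"
  proof (intro sum_mono)
    fix k :: nat
    have "W k * (real (k div 2) + 1) \<le> W (k div 2) * (real k + 1)" using Wmon[of "k div 2" k] by simp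
    moreover have "real k + 1 \<le> 2 * (real (k div 2) + 1)"
    proof -
      have "k \<le> 2 * (k div 2) + 1" by presburger
      then have "real k \<le> real (2 * (k div 2) + 1)" by (rule of_nat_mono)
      then show ?thesis by simp
    qed
    ultimately have "W k * (real (k div 2) + 1) \<le> W (k div 2) * (2 * (real (k div 2) + 1))"
      using Wnn[of "k div 2"] by (smt (verit) mult_left_mono)
    then have "W k * (real (k div 2) + 1) \<le> (2 * W (k div 2)) * (real (k div 2) + 1)" by (simp add: algebra_simps)
    then show "W k \<le> 2 * W (k div 2)" by (rule mult_right_le_imp_le) simp
  qed
  also have "\<dots> \<le> 2 * (\<Sum>k=0..Suc (2 * (n div 2)). W (k div 2))"
    unfolding sum_distrib_left[symmetric] using Wnn
    by (intro mult_left_mono sum_mono2) auto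
  also have "\<dots> = 4 * (\<Sum>i=0..n div 2. W i)" unfolding div2_sum by simp
  also have "(\<Sum>i=0..n div 2. W i) \<le> (\<Sum>i=0..n div 2. 2 * (W i * HH n i))"
  proof (intro sum_mono)
    fix i assume "i \<in> {0..n div 2}"
    then have "1/2 \<le> HH n i" by (intro HH_half) auto
    then have "W i * (1/2) \<le> W i * HH n i" by (rule mult_left_mono) (rule Wnn)
    then show "W i \<le> 2 * (W i * HH n i)" by simp
  qed
  also have "\<dots> \<le> 2 * (\<Sum>i=0..n. W i * HH n i)"
    unfolding sum_distrib_left[symmetric] using Wnn HH_nonneg
    by (intro mult_left_mono sum_mono2) auto
  finally show ?thesis by simp
qed

end

lemma sbp: assumes "h 0 = 0"
  shows "(\<Sum>j=1..n. h j * (g j - g (Suc j))) = (\<Sum>j=1..n. (h j - h (j - 1)) * g j) - h n * (g (Suc n) :: real)"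
proof (induction n)
  case 0 then show ?case using assms by simp
next
  case (Suc n)
  then show ?case by (simp add: algebra_simps)
qed

definition GG :: "(real \<Rightarrow> real) \<Rightarrow> real \<Rightarrow> real \<Rightarrow> real" where
  "GG f x \<delta> = integral {0..\<delta>} (\<lambda>u. \<bar>psi f x u\<bar>)"

lemma shift_sum1: "(\<Sum>j=1..(n::nat). F (j - 1)) = (\<Sum>k<n. (F k :: real))"
  by (induction n) auto

lemma cont_cot: assumes "0 < a" "b < 2 * pi" shows "continuous_on {a..b} (\<lambda>t. cot (t/2))"
  unfolding cot_def
proof (intro continuous_intros ballI)
  fix t assume "t \<in> {a..b}"
  then have "0 < t/2" "t/2 < pi" using assms by auto
  then show "sin (t/2) \<noteq> 0" using sin_gt_zero by fastforce
qed auto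

context
  fixes f :: "real \<Rightarrow> real" and x :: real and b :: "nat \<Rightarrow> nat \<Rightarrow> real" and C :: real
  assumes L: "L1_periodic f" and lt: "lt_stoch b"
    and bc: "\<forall>r l. l \<le> r \<longrightarrow> \<bar>b r (r - l) - b (r + 1) (r + 1 - l)\<bar> \<le> C / (real r + 1) ^ 2"
begin

lemma abs_psi_int: "(\<lambda>u. \<bar>psi f x u\<bar>) integrable_on {a..c}"
  using psi_abs_int[OF L, where x=x and a=a and b=c] unfolding absolutely_integrable_on_def by simp

lemma GG_nonneg: "0 \<le> GG f x \<delta>"
  unfolding GG_def by (rule integral_nonneg[OF abs_psi_int]) simp

lemma GG_diff: "0 \<le> a \<Longrightarrow> a \<le> c \<Longrightarrow> integral {a..c} (\<lambda>u. \<bar>psi f x u\<bar>) = GG f x c - GG f x a"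
  unfolding GG_def using hk_integral_combine[OF _ _ abs_psi_int, of 0 a c] by simp

lemma GG_mono: "0 \<le> a \<Longrightarrow> a \<le> c \<Longrightarrow> GG f x a \<le> GG f x c"
proof -
  assume "0 \<le> a" "a \<le> c"
  then have "0 \<le> integral {a..c} (\<lambda>u. \<bar>psi f x u\<bar>)" by (intro integral_nonneg abs_psi_int) auto
  then show ?thesis using GG_diff \<open>0 \<le> a\<close> \<open>a \<le> c\<close> by simp
qed

lemma w_GG: "w_conj f x (pi / (real k + 1)) = ((real k + 1) / pi) * GG f x (pi / (real k + 1))"
  unfolding w_conj_def GG_def by simp

lemma W_nonneg: "0 \<le> w_conj f x (pi / (real k + 1))"
  unfolding w_GG using GG_nonneg by simp

lemma W_mon: "k \<le> j \<Longrightarrow> w_conj f x (pi / (real j + 1)) * (real k + 1) \<le> w_conj f x (pi / (real k + 1)) * (real j + 1)"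
proof -
  assume kj: "k \<le> j"
  have "GG f x (pi / (real j + 1)) \<le> GG f x (pi / (real k + 1))"
    using kj by (intro GG_mono) (auto simp: frac_le)
  then have "((real j + 1) * (real k + 1) / pi) * GG f x (pi / (real j + 1)) \<le> ((real j + 1) * (real k + 1) / pi) * GG f x (pi / (real k + 1))"
    by (intro mult_left_mono) auto
  then show ?thesis unfolding w_GG by (simp add: algebra_simps)
qed

lemma Kn_abs: "\<bar>Kn b n t\<bar> \<le> real n"
proof -
  have "\<bar>Kn b n t\<bar> \<le> (\<Sum>r=0..n. \<Sum>k=0..r. \<bar>cesaro n r * b r k * Dk k t\<bar>)"
    unfolding Kn_def by (rule order_trans[OF sum_abs sum_mono[OF sum_abs]])
  also have "\<dots> \<le> (\<Sum>r=0..n. \<Sum>k=0..r. cesaro n r * b r k * real n)"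
  proof (intro sum_mono)
    fix r k assume r: "r \<in> {0..n}" and k: "k \<in> {0..r}"
    have "\<bar>Dk k t\<bar> \<le> real n" using dk_bound[where k=k and t=t] r k unfolding Dk_def by auto
    moreover have "0 \<le> cesaro n r * b r k" using b_nonneg[OF lt bc] by (simp add: cesaro_def)
    ultimately show "\<bar>cesaro n r * b r k * Dk k t\<bar> \<le> cesaro n r * b r k * real n"
      unfolding abs_mult[of "cesaro n r * b r k"] by (simp add: mult_left_mono)
  qed
  also have "\<dots> = (\<Sum>r=0..n. real n / (real n + 1))"
  proof (intro sum.cong refl)
    fix r assume "r \<in> {0..n}"
    then have "(\<Sum>k=0..r. cesaro n r * b r k * real n) = (real n / (real n + 1)) * (\<Sum>k=0..r. b r k)"
      by (simp add: cesaro_def sum_distrib_left sum_divide_distrib mult.commute)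
    then show "(\<Sum>k=0..r. cesaro n r * b r k * real n) = real n / (real n + 1)"
      using b_sum[OF lt bc] by simp
  qed
  also have "\<dots> = real n" by (simp add: field_simps)
  finally show ?thesis .
qed

lemma Kn_closed:
  assumes s: "sin (t/2) \<noteq> 0"
  shows "Kn b n t - cot (t/2) / 2 = - (\<Sum>r=0..n. \<Sum>k=0..r. b r k * cos ((real k + 1/2) * t)) / ((real n + 1) * (2 * sin (t/2)))"
proof -
  define s2 where "s2 = 2 * sin (t/2)"
  have s2: "s2 \<noteq> 0" using s by (simp add: s2_def)
  have D: "Dk k t = (cos (t/2) - cos ((real k + 1/2) * t)) / s2" for k
    using dk_closed[of t k] s2 unfolding Dk_def s2_def by (simp add: field_simps)
  have num: "(\<Sum>r=0..n. \<Sum>k=0..r. b r k * cos (t/2) - b r k * cos ((real k + 1/2) * t))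
      = (real n + 1) * cos (t/2) - (\<Sum>r=0..n. \<Sum>k=0..r. b r k * cos ((real k + 1/2) * t))"
  proof -
    have "(\<Sum>r=0..n. \<Sum>k=0..r. b r k * cos (t/2)) = (\<Sum>r=0..n. cos (t/2))"
    proof (intro sum.cong refl)
      fix r
      have "(\<Sum>k=0..r. b r k * cos (t/2)) = (\<Sum>k=0..r. b r k) * cos (t/2)" by (simp add: sum_distrib_right)
      then show "(\<Sum>k=0..r. b r k * cos (t/2)) = cos (t/2)" using b_sum[OF lt bc, of r] by simp
    qed
    then show ?thesis by (simp add: sum_subtractf)
  qed
  have "Kn b n t = (\<Sum>r=0..n. \<Sum>k=0..r. (b r k * cos (t/2) - b r k * cos ((real k + 1/2) * t)) / ((real n + 1) * s2))"
    unfolding Kn_def D by (intro sum.cong refl) (auto simp: cesaro_def field_simps)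
  also have "\<dots> = ((real n + 1) * cos (t/2) - (\<Sum>r=0..n. \<Sum>k=0..r. b r k * cos ((real k + 1/2) * t))) / ((real n + 1) * s2)"
    unfolding num[symmetric] sum_divide_distrib ..
  finally have "Kn b n t = \<dots>" .
  moreover have "cot (t/2) / 2 = ((real n + 1) * cos (t/2)) / ((real n + 1) * s2)"
  proof -
    have "((real n + 1) * cos (t/2)) / ((real n + 1) * s2) = cos (t/2) / s2"
      by (rule mult_divide_mult_cancel_left) simp
    then show ?thesis unfolding cot_def s2_def by simp
  qed
  ultimately show ?thesis unfolding s2_def[symmetric] by (simp add: diff_divide_distrib)
qed

definition hj :: "nat \<Rightarrow> nat \<Rightarrow> real" where
  "hj n j = (real j + 1)^2 * (3 + 4 * C * HH n j) / (2 * (real n + 1))"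

lemma Delta_bound:
  assumes j: "1 \<le> j" "j \<le> n" and t: "pi / (real j + 1) \<le> t" "t \<le> pi"
  shows "\<bar>Kn b n t - cot (t/2) / 2\<bar> \<le> hj n j"
proof -
  have C0: "0 \<le> C" using C_nonneg[OF lt bc] .
  have tpos: "0 < t" using t(1) by (smt (verit) divide_pos_pos of_nat_0_le_iff pi_gt_zero)
  have "t / pi \<le> sin (t/2)" using tpos t by (intro jordan) auto
  moreover have "1 / (real j + 1) \<le> t / pi" using t(1) pi_gt_zero by (simp add: field_simps)
  ultimately have s1: "1 / (real j + 1) \<le> sin (t/2)" by linarith
  then have spos: "0 < sin (t/2)" by (smt (verit) divide_pos_pos of_nat_0_le_iff)
  have inv: "1 / sin (t/2) \<le> real j + 1"
    using s1 spos by (simp add: field_simps)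
  define X where "X = \<bar>\<Sum>r=0..n. \<Sum>k=0..r. b r k * cos ((real k + 1/2) * t)\<bar>"
  define Hj where "Hj = HH n j"
  have Hj0: "0 \<le> Hj" unfolding Hj_def by (rule HH_nonneg)
  have "X \<le> real j + (2 / sin (t/2)) * (1 + 2 * C * Hj)"
  proof -
    have "j \<le> Suc n" using j by simp
    from kernel_bound[OF lt bc spos this] show ?thesis unfolding X_def Hj_def HH_def .
  qed
  also have "\<dots> \<le> real j + (2 * (real j + 1)) * (1 + 2 * C * Hj)"
  proof -
    have "2 / sin (t/2) = 2 * (1 / sin (t/2))" by simp
    moreover have "2 * (1 / sin (t/2)) \<le> 2 * (real j + 1)" using mult_left_mono[OF inv, of 2] by simp
    ultimately have "2 / sin (t/2) \<le> 2 * (real j + 1)" by simp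
    moreover have "0 \<le> 1 + 2 * C * Hj" using C0 Hj0 by simp
    ultimately show ?thesis by (intro add_left_mono mult_right_mono)
  qed
  also have "\<dots> \<le> (real j + 1) * (3 + 4 * C * Hj)"
  proof -
    have "real j + (2 * (real j + 1)) * (1 + 2 * C * Hj) = 3 * real j + 2 + (real j + 1) * (4 * C * Hj)"
      by (simp add: algebra_simps)
    moreover have "(real j + 1) * (3 + 4 * C * Hj) = 3 * real j + 3 + (real j + 1) * (4 * C * Hj)"
      by (simp add: algebra_simps)
    ultimately show ?thesis by linarith
  qed
  finally have X: "X \<le> (real j + 1) * (3 + 4 * C * Hj)" .
  have X0: "0 \<le> X" unfolding X_def by simp
  have den: "(real n + 1) * (2 * sin (t/2)) > 0" using spos by simp
  have "\<bar>Kn b n t - cot (t/2) / 2\<bar> = X / ((real n + 1) * (2 * sin (t/2)))"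
    unfolding Kn_closed[OF spos[THEN less_imp_neq, symmetric]] X_def using den
    by (simp add: abs_divide)
  also have "\<dots> = X * (1 / sin (t/2)) / (2 * (real n + 1))"
    using spos by (simp add: field_simps)
  also have "\<dots> \<le> ((real j + 1) * (3 + 4 * C * Hj)) * (real j + 1) / (2 * (real n + 1))"
  proof (intro divide_right_mono mult_mono X inv X0)
    show "0 \<le> 1 / sin (t/2)" using spos by simp
    show "0 \<le> (real j + 1) * (3 + 4 * C * Hj)" using C0 Hj0 by simp
  qed simp_all
  also have "\<dots> = hj n j" unfolding hj_def Hj_def by (simp add: power2_eq_square)
  finally show ?thesis .
qed

end

lemma int_pieces:
  fixes g :: "real \<Rightarrow> real"
  assumes gi: "\<And>a. 0 < a \<Longrightarrow> g integrable_on {a..pi}"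
  shows "integral {pi / real (Suc n)..pi} g = (\<Sum>j=1..n. integral {pi / real (Suc j)..pi / real j} g)"
proof (induction n)
  case 0 then show ?case by simp
next
  case (Suc n)
  have le1: "pi / real (Suc (Suc n)) \<le> pi / real (Suc n)" by (simp add: frac_le)
  have le2: "pi / real (Suc n) \<le> pi" by (simp add: field_simps)
  have "integral {pi / real (Suc (Suc n))..pi} g = integral {pi / real (Suc (Suc n))..pi / real (Suc n)} g + integral {pi / real (Suc n)..pi} g"
    by (rule hk_integral_combine[symmetric, OF le1 le2 gi]) simp
  then show ?case using Suc by (simp only: sum.cl_ivl_Suc) simp
qed

context
  fixes f :: "real \<Rightarrow> real" and x :: real and b :: "nat \<Rightarrow> nat \<Rightarrow> real" and C :: real
  assumes L: "L1_periodic f" and lt: "lt_stoch b"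
    and bc: "\<forall>r l. l \<le> r \<longrightarrow> \<bar>b r (r - l) - b (r + 1) (r + 1 - l)\<bar> \<le> C / (real r + 1) ^ 2"
begin

definition hh :: "nat \<Rightarrow> nat \<Rightarrow> real" where "hh n j = (if j = 0 then 0 else hj C n j)"

lemma hh_step:
  assumes "1 \<le> j"
  shows "hh n j - hh n (j - 1) \<le> 2 * real j * (3 + 4 * C * HH n j) / (real n + 1)"
proof -
  have C0: "0 \<le> C" using C_nonneg[OF lt bc] .
  define Q where "Q = 3 + 4 * C * HH n j"
  have Q0: "0 \<le> Q" unfolding Q_def using C0 HH_nonneg by simp
  show ?thesis
  proof (cases "j = 1")
    case True then show ?thesis unfolding hh_def hj_def[OF L lt bc] by (simp add: field_simps power2_eq_square)
  next
    case False
    then have j2: "2 \<le> j" using assms by simp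
    have rj: "real (j - 1) + 1 = real j" using assms by (simp add: of_nat_diff)
    have "HH n j \<le> HH n (j - 1)" using assms by (rule HH_step)
    then have "real j ^ 2 * Q \<le> real j ^ 2 * (3 + 4 * C * HH n (j - 1))"
      unfolding Q_def using C0 by (intro mult_left_mono) (auto intro: mult_left_mono)
    then have "real j ^ 2 * Q / (2 * (real n + 1)) \<le> hh n (j - 1)"
      unfolding hh_def hj_def[OF L lt bc] using j2 rj by (simp add: divide_right_mono)
    moreover have "hh n j = (real j + 1) ^ 2 * Q / (2 * (real n + 1))"
      unfolding hh_def hj_def[OF L lt bc] Q_def using j2 by simp
    ultimately have "hh n j - hh n (j - 1) \<le> ((real j + 1) ^ 2 - real j ^ 2) * Q / (2 * (real n + 1))"
      by (simp add: diff_divide_distrib left_diff_distrib)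
    also have "\<dots> \<le> (4 * real j) * Q / (2 * (real n + 1))"
      using Q0 j2 by (intro divide_right_mono mult_right_mono) (auto simp: power2_eq_square algebra_simps)
    also have "\<dots> = 2 * real j * Q / (real n + 1)"
    proof -
      have d: "2 * (real n + 1) \<noteq> 0" "real n + 1 \<noteq> 0" by (simp_all add: add_nonneg_eq_0_iff)
      show ?thesis using d by (simp add: field_simps)
    qed
    finally show ?thesis unfolding Q_def .
  qed
qed

lemma hh_nonneg: "0 \<le> hh n j"
  unfolding hh_def hj_def[OF L lt bc] using C_nonneg[OF lt bc] HH_nonneg by simp

lemma sum_est:
  "(\<Sum>j=1..n. hj C n j * (GG f x (pi / real j) - GG f x (pi / (real j + 1))))
     \<le> (2 * pi / (real n + 1)) * (\<Sum>k=0..n. (3 + 4 * C * HH n k) * w_conj f x (pi / (real k + 1)))"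
proof -
  define g where "g j = GG f x (pi / real j)" for j
  define F where "F k = (2 * pi / (real n + 1)) * ((3 + 4 * C * HH n k) * w_conj f x (pi / (real k + 1)))" for k
  have C0: "0 \<le> C" using C_nonneg[OF lt bc] .
  have F0: "0 \<le> F k" for k
    unfolding F_def using C0 HH_nonneg W_nonneg[OF L lt bc] by simp
  have "(\<Sum>j=1..n. hj C n j * (GG f x (pi / real j) - GG f x (pi / (real j + 1)))) = (\<Sum>j=1..n. hh n j * (g j - g (Suc j)))"
    unfolding hh_def g_def by (intro sum.cong refl) (auto simp: add.commute)
  also have "\<dots> = (\<Sum>j=1..n. (hh n j - hh n (j - 1)) * g j) - hh n n * g (Suc n)"
    by (rule sbp) (simp add: hh_def)
  also have "\<dots> \<le> (\<Sum>j=1..n. (hh n j - hh n (j - 1)) * g j)"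
    using hh_nonneg GG_nonneg[OF L lt bc] unfolding g_def by simp
  also have "\<dots> \<le> (\<Sum>j=1..n. F (j - 1))"
  proof (intro sum_mono)
    fix j assume j: "j \<in> {1..n}"
    have g0: "0 \<le> g j" unfolding g_def by (rule GG_nonneg[OF L lt bc])
    have rj: "real (j - 1) + 1 = real j" using j by (simp add: of_nat_diff)
    have "(hh n j - hh n (j - 1)) * g j \<le> (2 * real j * (3 + 4 * C * HH n j) / (real n + 1)) * g j"
      using hh_step[of j n] j g0 by (intro mult_right_mono) auto
    also have "\<dots> = (2 * pi / (real n + 1)) * ((3 + 4 * C * HH n j) * w_conj f x (pi / (real (j - 1) + 1)))"
    proof -
      have wj: "w_conj f x (pi / (real (j - 1) + 1)) = (real j / pi) * GG f x (pi / real j)"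
        using w_GG[OF L lt bc, where x=x and k="j - 1"] rj by simp
      define d where "d = real n + 1"
      have d0: "d \<noteq> 0" unfolding d_def by (simp add: add_nonneg_eq_0_iff)
      have p0: "pi \<noteq> 0" by simp
      show ?thesis unfolding wj g_def d_def[symmetric] using d0 p0 by (simp add: field_simps)
    qed
    also have "\<dots> \<le> F (j - 1)"
    proof -
      have "C * HH n j \<le> C * HH n (j - 1)" using HH_step[of j n] j C0 by (intro mult_left_mono) auto
      moreover have "0 \<le> w_conj f x (pi / (real (j - 1) + 1))" by (rule W_nonneg[OF L lt bc])
      ultimately show ?thesis unfolding F_def by (intro mult_left_mono mult_right_mono) auto
    qed
    finally show "(hh n j - hh n (j - 1)) * g j \<le> F (j - 1)" .
  qed
  also have "\<dots> = (\<Sum>k<n. F k)" by (rule shift_sum1)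
  also have "\<dots> \<le> (\<Sum>k=0..n. F k)" using F0 by (intro sum_mono2) auto
  also have "\<dots> = (2 * pi / (real n + 1)) * (\<Sum>k=0..n. (3 + 4 * C * HH n k) * w_conj f x (pi / (real k + 1)))"
    unfolding F_def sum_distrib_left ..
  finally show ?thesis .
qed

end

context
  fixes f :: "real \<Rightarrow> real" and x :: real and b :: "nat \<Rightarrow> nat \<Rightarrow> real" and C :: real
  assumes L: "L1_periodic f" and lt: "lt_stoch b"
    and bc: "\<forall>r l. l \<le> r \<longrightarrow> \<bar>b r (r - l) - b (r + 1) (r + 1 - l)\<bar> \<le> C / (real r + 1) ^ 2"
begin

lemma iC: "0 < a \<Longrightarrow> (\<lambda>t. psi f x t * (cot (t/2) / 2)) integrable_on {a..pi}"
  by (intro psi_int L continuous_on_divide cont_cot continuous_on_const) auto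

lemma contD: "0 < a \<Longrightarrow> continuous_on {a..pi} (\<lambda>t. Kn b n t - cot (t/2) / 2)"
  by (intro continuous_on_diff cont_Kn continuous_on_divide cont_cot continuous_on_const) auto

lemma iD: "0 < a \<Longrightarrow> (\<lambda>t. psi f x t * (Kn b n t - cot (t/2) / 2)) integrable_on {a..pi}"
  by (intro psi_int L contD)

lemma iK: "(\<lambda>t. psi f x t * Kn b n t) integrable_on {a..c}"
  by (intro psi_int L cont_Kn)

lemma piece:
  assumes j: "1 \<le> j" "j \<le> n"
  shows "\<bar>integral {pi / (real j + 1)..pi / real j} (\<lambda>t. psi f x t * (Kn b n t - cot (t/2) / 2))\<bar>
     \<le> hj C n j * (GG f x (pi / real j) - GG f x (pi / (real j + 1)))"
proof -
  have a0: "0 < pi / (real j + 1)" by simp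
  have a1: "pi / (real j + 1) \<le> pi / real j" using j by (simp add: frac_le)
  have a2: "pi / real j \<le> pi" using j by (simp add: field_simps)
  have i1: "(\<lambda>t. psi f x t * (Kn b n t - cot (t/2) / 2)) integrable_on {pi / (real j + 1)..pi / real j}"
    by (rule integrable_subinterval_real[OF iD[OF a0]]) (use a2 in auto)
  have i2: "(\<lambda>t. hj C n j * \<bar>psi f x t\<bar>) integrable_on {pi / (real j + 1)..pi / real j}"
    by (intro integrable_on_mult_right abs_psi_int[OF L lt bc])
  have "norm (integral {pi / (real j + 1)..pi / real j} (\<lambda>t. psi f x t * (Kn b n t - cot (t/2) / 2)))
      \<le> integral {pi / (real j + 1)..pi / real j} (\<lambda>t. hj C n j * \<bar>psi f x t\<bar>)"
  proof (rule integral_norm_bound_integral[OF i1 i2])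
    fix t assume t: "t \<in> {pi / (real j + 1)..pi / real j}"
    have "\<bar>Kn b n t - cot (t/2) / 2\<bar> \<le> hj C n j"
      using t a2 by (intro Delta_bound[OF L lt bc] j) auto
    then have "\<bar>psi f x t\<bar> * \<bar>Kn b n t - cot (t/2) / 2\<bar> \<le> \<bar>psi f x t\<bar> * hj C n j"
      by (rule mult_left_mono) simp
    then show "norm (psi f x t * (Kn b n t - cot (t/2) / 2)) \<le> hj C n j * \<bar>psi f x t\<bar>"
      by (simp add: abs_mult mult.commute)
  qed
  also have "\<dots> = hj C n j * (GG f x (pi / real j) - GG f x (pi / (real j + 1)))"
    using GG_diff[OF L lt bc, of "pi / (real j + 1)" "pi / real j"] a0 a1
    by (simp add: Henstock_Kurzweil_Integration.integral_mult_right)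
  finally show ?thesis by simp
qed

lemma main_est:
  "\<bar>T_conj cesaro b f n x - conj_trunc f x (pi / (real n + 1))\<bar>
     \<le> w_conj f x (pi / (real n + 1)) + (2 / (real n + 1)) * (\<Sum>k=0..n. (3 + 4 * C * HH n k) * w_conj f x (pi / (real k + 1)))"
proof -
  define e where "e = pi / (real n + 1)"
  define S where "S = (\<Sum>k=0..n. (3 + 4 * C * HH n k) * w_conj f x (pi / (real k + 1)))"
  define D where "D t = Kn b n t - cot (t/2) / 2" for t
  have e0: "0 < e" unfolding e_def by simp
  have epi: "e \<le> pi" unfolding e_def by (simp add: field_simps)
  define A where "A = integral {0..e} (\<lambda>t. psi f x t * Kn b n t)"
  define B where "B = integral {e..pi} (\<lambda>t. psi f x t * D t)"
  define P where "P = integral {0..pi} (\<lambda>t. psi f x t * Kn b n t)"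
  define Q where "Q = integral {e..pi} (\<lambda>t. psi f x t * Kn b n t)"
  define R where "R = integral {e..pi} (\<lambda>t. psi f x t * (cot (t/2) / 2))"
  have e1: "P = A + Q"
    unfolding A_def P_def Q_def using hk_integral_combine[OF _ epi iK, of 0] e0 by simp
  have e2: "B = Q - R"
  proof -
    have "B = integral {e..pi} (\<lambda>t. psi f x t * Kn b n t - psi f x t * (cot (t/2) / 2))"
      unfolding B_def D_def by (simp add: right_diff_distrib)
    then show ?thesis unfolding Q_def R_def using Henstock_Kurzweil_Integration.integral_diff[OF iK iC[OF e0]] by simp
  qed
  have "T_conj cesaro b f n x - conj_trunc f x e = -(1/pi) * P - (-(1/pi) * R)"
    unfolding T_conj_int[OF L] conj_trunc_def P_def R_def ..
  also have "\<dots> = -(1/pi) * (A + B)" unfolding e1 e2 by (simp add: algebra_simps)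
  finally have TT: "T_conj cesaro b f n x - conj_trunc f x e = -(1/pi) * (A + B)" .
  have Abound: "\<bar>A\<bar> \<le> pi * w_conj f x e"
  proof -
    have "norm A \<le> integral {0..e} (\<lambda>t. real n * \<bar>psi f x t\<bar>)"
      unfolding A_def
    proof (rule integral_norm_bound_integral[OF iK])
      show "(\<lambda>t. real n * \<bar>psi f x t\<bar>) integrable_on {0..e}"
        by (intro integrable_on_mult_right abs_psi_int[OF L lt bc])
      fix t show "norm (psi f x t * Kn b n t) \<le> real n * \<bar>psi f x t\<bar>"
      proof -
        have "\<bar>psi f x t\<bar> * \<bar>Kn b n t\<bar> \<le> \<bar>psi f x t\<bar> * real n"
          using Kn_abs[OF L lt bc, of n t] by (rule mult_left_mono) simp
        then show ?thesis by (simp add: abs_mult mult.commute)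
      qed
    qed
    also have "\<dots> = real n * GG f x e" unfolding GG_def
      by (simp add: Henstock_Kurzweil_Integration.integral_mult_right)
    also have "\<dots> \<le> (real n + 1) * GG f x e"
      using GG_nonneg[OF L lt bc] by (intro mult_right_mono) auto
    also have "\<dots> = pi * w_conj f x e"
      unfolding e_def w_GG[OF L lt bc] by simp
    finally show ?thesis by simp
  qed
  have Bbound: "\<bar>B\<bar> \<le> (2 * pi / (real n + 1)) * S"
  proof -
    have "B = (\<Sum>j=1..n. integral {pi / real (Suc j)..pi / real j} (\<lambda>t. psi f x t * D t))"
    proof -
      have "e = pi / real (Suc n)" unfolding e_def by (simp add: add.commute)
      then show ?thesis unfolding B_def D_def by (simp only:) (rule int_pieces, rule iD)
    qed
    also have "\<dots> = (\<Sum>j=1..n. integral {pi / (real j + 1)..pi / real j} (\<lambda>t. psi f x t * D t))"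
      by (intro sum.cong refl) (simp add: add.commute)
    finally have Bs: "B = (\<Sum>j=1..n. integral {pi / (real j + 1)..pi / real j} (\<lambda>t. psi f x t * D t))" .
    have "\<bar>B\<bar> \<le> (\<Sum>j=1..n. \<bar>integral {pi / (real j + 1)..pi / real j} (\<lambda>t. psi f x t * D t)\<bar>)"
      unfolding Bs by (rule sum_abs)
    also have "\<dots> \<le> (\<Sum>j=1..n. hj C n j * (GG f x (pi / real j) - GG f x (pi / (real j + 1))))"
      unfolding D_def by (intro sum_mono piece) auto
    also have "\<dots> \<le> (2 * pi / (real n + 1)) * S"
      unfolding S_def by (rule sum_est[OF L lt bc])
    finally show ?thesis .
  qed
  have "\<bar>T_conj cesaro b f n x - conj_trunc f x e\<bar> = (1/pi) * \<bar>A + B\<bar>"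
    unfolding TT by (simp add: abs_mult)
  also have "\<dots> \<le> (1/pi) * (pi * w_conj f x e + (2 * pi / (real n + 1)) * S)"
    using Abound Bbound abs_triangle_ineq[of A B] by (intro mult_left_mono) auto
  also have "\<dots> = w_conj f x e + (2 / (real n + 1)) * S"
  proof -
    define d where "d = real n + 1"
    have "d \<noteq> 0" unfolding d_def by (simp add: add_nonneg_eq_0_iff)
    moreover have "pi \<noteq> 0" by simp
    ultimately show ?thesis unfolding d_def[symmetric] by (simp add: field_simps)
  qed
  finally show ?thesis unfolding e_def S_def .
qed

lemma rhs_eq: "rhs_sum f x n = (1 / (real n + 1)) * (\<Sum>k=0..n. w_conj f x (pi / (real k + 1)) * HH n k)"
proof -
  have "(\<Sum>r=0..n. (1 / (real r + 1)) * (\<Sum>k=0..r. w_conj f x (pi / (real k + 1))))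
      = (\<Sum>r=0..n. \<Sum>k=0..r. (1 / (real r + 1)) * w_conj f x (pi / (real k + 1)))"
    by (simp add: sum_distrib_left)
  also have "\<dots> = (\<Sum>k=0..n. \<Sum>r=k..n. (1 / (real r + 1)) * w_conj f x (pi / (real k + 1)))"
    by (rule sum_swap_tri)
  also have "\<dots> = (\<Sum>k=0..n. w_conj f x (pi / (real k + 1)) * HH n k)"
    unfolding HH_def by (simp add: sum_distrib_left sum_distrib_right mult.commute)
  finally show ?thesis unfolding rhs_sum_def by simp
qed

lemma part1_bound:
  "\<bar>T_conj cesaro b f n x - conj_trunc f x (pi / (real n + 1))\<bar> \<le> (64 + 8 * C) * rhs_sum f x n"
proof -
  define W where "W k = w_conj f x (pi / (real k + 1))" for k
  have Wnn: "\<And>k. 0 \<le> W k" unfolding W_def by (rule W_nonneg[OF L lt bc])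
  have Wmon: "\<And>k j. k \<le> j \<Longrightarrow> W j * (real k + 1) \<le> W k * (real j + 1)"
    unfolding W_def by (rule W_mon[OF L lt bc])
  define S1 where "S1 = (\<Sum>k=0..n. W k)"
  define S2 where "S2 = (\<Sum>k=0..n. W k * HH n k)"
  have C0: "0 \<le> C" using C_nonneg[OF lt bc] .
  have wl: "W n \<le> (2 / (real n + 1)) * S1" unfolding S1_def by (rule W_last[OF Wnn Wmon])
  have ws: "S1 \<le> 8 * S2" unfolding S1_def S2_def by (rule W_sum[OF Wnn Wmon])
  have S2nn: "0 \<le> S2" unfolding S2_def using Wnn HH_nonneg by (intro sum_nonneg mult_nonneg_nonneg) auto
  have sp: "(\<Sum>k=0..n. (3 + 4 * C * HH n k) * W k) = 3 * S1 + 4 * C * S2"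
    unfolding S1_def S2_def by (simp add: algebra_simps sum.distrib sum_distrib_left)
  have "\<bar>T_conj cesaro b f n x - conj_trunc f x (pi / (real n + 1))\<bar> \<le> W n + (2 / (real n + 1)) * (3 * S1 + 4 * C * S2)"
    using main_est[of n] unfolding W_def[symmetric] sp .
  also have "\<dots> \<le> (2 / (real n + 1)) * S1 + (2 / (real n + 1)) * (3 * S1 + 4 * C * S2)"
    using wl by simp
  also have "\<dots> = (1 / (real n + 1)) * (8 * S1 + 8 * C * S2)"
  proof -
    define d where "d = real n + 1"
    have "d \<noteq> 0" unfolding d_def by (simp add: add_nonneg_eq_0_iff)
    then show ?thesis unfolding d_def[symmetric] by (simp add: field_simps)
  qed
  also have "\<dots> \<le> (1 / (real n + 1)) * (64 * S2 + 8 * C * S2)"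
    using ws by (intro mult_left_mono) auto
  also have "\<dots> = (64 + 8 * C) * ((1 / (real n + 1)) * S2)" by (simp add: algebra_simps)
  also have "\<dots> = (64 + 8 * C) * rhs_sum f x n" unfolding rhs_eq S2_def W_def ..
  finally show ?thesis .
qed

lemma W_rhs: "w_conj f x (pi / (real n + 1)) \<le> 16 * rhs_sum f x n"
proof -
  define W where "W k = w_conj f x (pi / (real k + 1))" for k
  have Wnn: "\<And>k. 0 \<le> W k" unfolding W_def by (rule W_nonneg[OF L lt bc])
  have Wmon: "\<And>k j. k \<le> j \<Longrightarrow> W j * (real k + 1) \<le> W k * (real j + 1)"
    unfolding W_def by (rule W_mon[OF L lt bc])
  have "W n \<le> (2 / (real n + 1)) * (\<Sum>k=0..n. W k)" by (rule W_last[OF Wnn Wmon])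
  also have "\<dots> \<le> (2 / (real n + 1)) * (8 * (\<Sum>k=0..n. W k * HH n k))"
    by (intro mult_left_mono W_sum[OF Wnn Wmon]) auto
  also have "\<dots> = 16 * rhs_sum f x n" unfolding rhs_eq W_def by simp
  finally show ?thesis unfolding W_def .
qed

end

lemma lim_bound:
  assumes L: "L1_periodic f" and ex: "conj_exists f x" and e: "0 < e" "e \<le> pi"
    and int: "(\<lambda>t. \<bar>psi f x t\<bar> / t) integrable_on {0..e}"
  shows "\<bar>conj_fun f x - conj_trunc f x e\<bar> \<le> (1/pi) * integral {0..e} (\<lambda>t. \<bar>psi f x t\<bar> / t)"
proof -
  define M where "M = (1/pi) * integral {0..e} (\<lambda>t. \<bar>psi f x t\<bar> / t)"
  obtain l where l: "((\<lambda>\<epsilon>. conj_trunc f x \<epsilon>) \<longlongrightarrow> l) (at_right 0)"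
    using ex unfolding conj_exists_def by blast
  have fl: "conj_fun f x = l" unfolding conj_fun_def by (rule tendsto_Lim) (simp_all add: l)
  have iC: "(\<lambda>t. psi f x t * (cot (t/2) / 2)) integrable_on {a..pi}" if "0 < a" for a
    using that by (intro psi_int L continuous_on_divide cont_cot continuous_on_const) auto
  have bd: "\<bar>conj_trunc f x \<delta> - conj_trunc f x e\<bar> \<le> M" if d: "0 < \<delta>" "\<delta> < e" for \<delta>
  proof -
    have "integral {\<delta>..pi} (\<lambda>t. psi f x t * (cot (t/2) / 2))
        = integral {\<delta>..e} (\<lambda>t. psi f x t * (cot (t/2) / 2)) + integral {e..pi} (\<lambda>t. psi f x t * (cot (t/2) / 2))"
      using d e by (intro hk_integral_combine[symmetric] iC) auto
    moreover have "conj_trunc f x \<delta> - conj_trunc f x e = -(1/pi) * integral {\<delta>..pi} (\<lambda>t. psi f x t * (cot (t/2) / 2)) - (-(1/pi) * integral {e..pi} (\<lambda>t. psi f x t * (cot (t/2) / 2)))"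
      unfolding conj_trunc_def ..
    ultimately have eq: "conj_trunc f x \<delta> - conj_trunc f x e = -(1/pi) * integral {\<delta>..e} (\<lambda>t. psi f x t * (cot (t/2) / 2))"
      by (simp only:) (simp only: algebra_simps)
    have i1: "(\<lambda>t. psi f x t * (cot (t/2) / 2)) integrable_on {\<delta>..e}"
      by (rule integrable_subinterval_real[OF iC[OF d(1)]]) (use e in auto)
    have i2: "(\<lambda>t. \<bar>psi f x t\<bar> / t) integrable_on {\<delta>..e}"
      by (rule integrable_subinterval_real[OF int]) (use d in auto)
    have "norm (integral {\<delta>..e} (\<lambda>t. psi f x t * (cot (t/2) / 2))) \<le> integral {\<delta>..e} (\<lambda>t. \<bar>psi f x t\<bar> / t)"
    proof (rule integral_norm_bound_integral[OF i1 i2])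
      fix t assume t: "t \<in> {\<delta>..e}"
      then have t0: "0 < t" "t \<le> pi" using d e by auto
      have c1: "cot (t/2) / 2 \<le> 1 / t" and c0: "0 \<le> cot (t/2) / 2" using cot_half_le[OF t0] by auto
      have "\<bar>psi f x t\<bar> * (cot (t/2) / 2) \<le> \<bar>psi f x t\<bar> * (1 / t)"
        using c1 by (rule mult_left_mono) simp
      then show "norm (psi f x t * (cot (t/2) / 2)) \<le> \<bar>psi f x t\<bar> / t"
        using c0 by (simp add: abs_mult)
    qed
    also have "\<dots> \<le> integral {0..e} (\<lambda>t. \<bar>psi f x t\<bar> / t)"
      by (rule integral_subset_le[OF _ i2 int]) (use d in auto)
    finally have hI: "\<bar>integral {\<delta>..e} (\<lambda>t. psi f x t * (cot (t/2) / 2))\<bar> \<le> integral {0..e} (\<lambda>t. \<bar>psi f x t\<bar> / t)"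
      by (simp only: real_norm_def)
    define Iv where "Iv = integral {\<delta>..e} (\<lambda>t. psi f x t * (cot (t/2) / 2))"
    define J where "J = integral {0..e} (\<lambda>t. \<bar>psi f x t\<bar> / t)"
    have "\<bar>Iv\<bar> \<le> J" using hI unfolding Iv_def J_def .
    then have "(1/pi) * \<bar>Iv\<bar> \<le> (1/pi) * J" by (rule mult_left_mono) simp
    moreover have "\<bar>-(1/pi) * Iv\<bar> = (1/pi) * \<bar>Iv\<bar>" by (simp add: abs_mult)
    ultimately show ?thesis unfolding eq M_def Iv_def[symmetric] J_def[symmetric] by simp
  qed
  have ev: "eventually (\<lambda>\<delta>. \<bar>conj_trunc f x \<delta> - conj_trunc f x e\<bar> \<le> M) (at_right 0)"
    unfolding eventually_at_right_field using e bd by blast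
  have "((\<lambda>\<delta>. \<bar>conj_trunc f x \<delta> - conj_trunc f x e\<bar>) \<longlongrightarrow> \<bar>l - conj_trunc f x e\<bar>) (at_right 0)"
    by (intro tendsto_intros l)
  then have "\<bar>l - conj_trunc f x e\<bar> \<le> M"
    by (rule tendsto_upperbound[OF _ ev]) simp
  then show ?thesis unfolding fl M_def .
qed

theorem theorem2:
  fixes f :: "real \<Rightarrow> real" and b :: "nat \<Rightarrow> nat \<Rightarrow> real"
  assumes "L1_periodic f"
    and "lt_stoch b"
    and "\<exists>C>0. \<forall>r l. l \<le> r \<longrightarrow>
           \<bar>b r (r - l) - b (r + 1) (r + 1 - l)\<bar> \<le> C / (real r + 1) ^ 2"
  shows "(\<forall>x. \<exists>K>0. \<forall>n.
            \<bar>T_conj cesaro b f n x - conj_trunc f x (pi / (real n + 1))\<bar> \<le> K * rhs_sum f x n)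
       \<and> (\<forall>x. conj_exists f x
              \<and> (\<exists>K'>0. \<forall>n. (\<lambda>t. \<bar>psi f x t\<bar> / t) integrable_on {0..pi / (real n + 1)}
                   \<and> (1 / pi) * integral {0..pi / (real n + 1)} (\<lambda>t. \<bar>psi f x t\<bar> / t)
                       \<le> K' * w_conj f x (pi / (real n + 1)))
            \<longrightarrow> (\<exists>K>0. \<forall>n. \<bar>T_conj cesaro b f n x - conj_fun f x\<bar> \<le> K * rhs_sum f x n))"
proof -
  note L = assms(1) and lt = assms(2)
  obtain C where C: "C > 0" and bc: "\<forall>r l. l \<le> r \<longrightarrow> \<bar>b r (r - l) - b (r + 1) (r + 1 - l)\<bar> \<le> C / (real r + 1) ^ 2"
    using assms(3) by blast
  have K0: "0 < 64 + 8 * C" using C by simp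
  show ?thesis
  proof (intro conjI allI impI)
    fix x
    show "\<exists>K>0. \<forall>n. \<bar>T_conj cesaro b f n x - conj_trunc f x (pi / (real n + 1))\<bar> \<le> K * rhs_sum f x n"
      using part1_bound[OF L lt bc] K0 by blast
  next
    fix x
    assume H: "conj_exists f x \<and> (\<exists>K'>0. \<forall>n. (\<lambda>t. \<bar>psi f x t\<bar> / t) integrable_on {0..pi / (real n + 1)}
                   \<and> (1 / pi) * integral {0..pi / (real n + 1)} (\<lambda>t. \<bar>psi f x t\<bar> / t)
                       \<le> K' * w_conj f x (pi / (real n + 1)))"
    then obtain K' where K': "K' > 0" and HK: "\<And>n. (\<lambda>t. \<bar>psi f x t\<bar> / t) integrable_on {0..pi / (real n + 1)}
                   \<and> (1 / pi) * integral {0..pi / (real n + 1)} (\<lambda>t. \<bar>psi f x t\<bar> / t)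
                       \<le> K' * w_conj f x (pi / (real n + 1))" by blast
    have ex: "conj_exists f x" using H by blast
    have "\<bar>T_conj cesaro b f n x - conj_fun f x\<bar> \<le> (64 + 8 * C + 16 * K') * rhs_sum f x n" for n
    proof -
      have e0: "0 < pi / (real n + 1)" by simp
      have e1: "pi / (real n + 1) \<le> pi" by (simp add: field_simps)
      have a: "\<bar>T_conj cesaro b f n x - conj_trunc f x (pi / (real n + 1))\<bar> \<le> (64 + 8 * C) * rhs_sum f x n"
        by (rule part1_bound[OF L lt bc])
      have "\<bar>conj_fun f x - conj_trunc f x (pi / (real n + 1))\<bar> \<le> (1/pi) * integral {0..pi / (real n + 1)} (\<lambda>t. \<bar>psi f x t\<bar> / t)"
        using HK[of n] by (intro lim_bound[OF L ex e0 e1]) blast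
      also have "\<dots> \<le> K' * w_conj f x (pi / (real n + 1))" using HK[of n] by blast
      also have "\<dots> \<le> K' * (16 * rhs_sum f x n)"
        using K' W_rhs[OF L lt bc, of x n] by (intro mult_left_mono) auto
      finally have bb: "\<bar>conj_fun f x - conj_trunc f x (pi / (real n + 1))\<bar> \<le> 16 * K' * rhs_sum f x n" by simp
      show ?thesis using a bb by (simp add: algebra_simps)
    qed
    moreover have "0 < 64 + 8 * C + 16 * K'" using C K' by simp
    ultimately show "\<exists>K>0. \<forall>n. \<bar>T_conj cesaro b f n x - conj_fun f x\<bar> \<le> K * rhs_sum f x n" by blast
  qed
qed

end
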